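(* Let $N\ge 3$ and consider a smooth field $u:\mathbb{R}^N\to\mathbb{R}$ with $t_1=x$ the space variable, and a hierarchy of evolutionary equations \[ u_{t_i}=Q_i(u_1,u_{11},\ldots),\qquad i=2,\ldots,N, \] where $Q_i$ depends only on $t_1$-derivatives of $u$. Let $L_{1i}$, $i=2,\ldots,N$, be Lagrangians of the form \[ L_{1i}[u]=p(u,u_1,u_{11},\ldots)\,u_{t_i}-h_i(u,u_1,u_{11},\ldots), \] with the same function $p$ for all $i$, whose Euler–Lagrange equations $\frac{\delta_{1i}L_{1i}}{\delta u}=0$ are of the form $\mathcal{E}_p(u_{t_i}-Q_i)=0$ for some differential operator $\mathcal{E}_p$. Assume that the prolonged vector fields $\mathfrak{D}_i=\mathrm{pr}(Q_i\partial_u)$, $i=2,\ldots,N$, commute pairwise and are variational symmetries of the Lagrangians, i.e. for all $i\ne j$ in $\{2,\ldots,N\}$ \[ \mathfrak{D}_i L_{1j}=\mathrm{D}_1A_{ij}+\mathrm{D}_jB_{ij} \] for some functions $A_{ij},B_{ij}:\mathcal{J}^\infty\to\mathbb{R}$. Then for all $i\ne j$ in $\{2,\ldots,N\}$ there exist functions $F_{ij}:\mathcal{J}^\infty\to\mathbb{R}$ of the form $F_{ij}=F_{ij}(u,u_1,u_{11},\ldots)$ (not depending on any time derivatives) such that \[ \mathrm{D}_1F_{ij}=\mathrm{D}_iL_{1j}-\mathrm{D}_jL_{1i} \] on solutions of the hierarchy.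
   Context: Subscripts $1,11,\ldots$ denote derivatives with respect to $t_1$ (e.g. $u_{11}=\partial^2u/\partial t_1^2$), and $u_{t_i}$ the derivative with respect to $t_i$. $\mathcal{J}^\infty$ denotes the fiber of the infinite jet bundle, with coordinates all partial derivatives $u_I$ of $u$, $I\in\mathbb{N}^N$ a multi-index. Total derivatives: $\mathrm{D}_i=\sum_I u_{It_i}\partial/\partial u_I$, $\mathrm{D}_I=\mathrm{D}_1^{i_1}\cdots\mathrm{D}_N^{i_N}$. For $Q:\mathcal{J}^\infty\to\mathbb{R}$, the prolongation is $\mathrm{pr}(Q\partial_u)=\sum_I(\mathrm{D}_IQ)\,\partial/\partial u_I$. The variational derivative in the $(t_i,t_j)$-plane is $\frac{\delta_{ij}L}{\delta u_I}=\sum_{\alpha,\beta\ge0}(-1)^{\alpha+\beta}\mathrm{D}_i^\alpha\mathrm{D}_j^\beta\big(\partial L/\partial u_{It_i^\alpha t_j^\beta}\big)$. *)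

theory Defs
  imports "HOL-Analysis.Analysis"
begin

text \<open>Independent variables t_1,...,t_N (t_1 = x).
A multi-index is a function I :: nat => nat, with I k = 0 for k outside {1..N}.
A point of the fibre of the infinite jet bundle is z :: (nat => nat) => real,
z I being the coordinate u_I.  Functions on the jet space carry the product
topology (HOL-Analysis Function_Topology).\<close>

type_synonym midx = "nat \<Rightarrow> nat"
type_synonym jet = "midx \<Rightarrow> real"

definition valid_midx :: "nat \<Rightarrow> midx \<Rightarrow> bool" where
  "valid_midx N I \<longleftrightarrow> (\<forall>k. k \<notin> {1..N} \<longrightarrow> I k = 0)"

text \<open>unit multi-index e_i (so that z (unit_midx i) = u_{t_i}) and zero multi-index (u itself)\<close>
definition unit_midx :: "nat \<Rightarrow> midx" where
  "unit_midx i = (\<lambda>k. if k = i then 1 else 0)"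

definition zero_midx :: midx where
  "zero_midx = (\<lambda>k. 0)"

definition shift_midx :: "nat \<Rightarrow> midx \<Rightarrow> midx" where
  "shift_midx i I = I(i := Suc (I i))"

definition jdep :: "(jet \<Rightarrow> real) \<Rightarrow> midx set" where
  "jdep f = {I. \<exists>z s. f (z(I := s)) \<noteq> f z}"

definition depends_only_on :: "midx set \<Rightarrow> (jet \<Rightarrow> real) \<Rightarrow> bool" where
  "depends_only_on S f \<longleftrightarrow> (\<forall>z z'. (\<forall>I\<in>S. z I = z' I) \<longrightarrow> f z = f z')"

definition pd :: "midx \<Rightarrow> (jet \<Rightarrow> real) \<Rightarrow> jet \<Rightarrow> real" where
  "pd I f z = deriv (\<lambda>s. f (z(I := s))) (z I)"

fun pds :: "midx list \<Rightarrow> (jet \<Rightarrow> real) \<Rightarrow> jet \<Rightarrow> real" where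
  "pds [] f = f"
| "pds (I # Is) f = pd I (pds Is f)"

definition jet_smooth :: "(jet \<Rightarrow> real) \<Rightarrow> bool" where
  "jet_smooth f \<longleftrightarrow>
     (\<forall>Is. (\<forall>I z. (\<lambda>s. pds Is f (z(I := s))) differentiable (at (z I)))
          \<and> continuous_on UNIV (pds Is f))"

text \<open>a (smooth) function on J^infinity: depends on finitely many valid coordinates\<close>
definition jfun :: "nat \<Rightarrow> (jet \<Rightarrow> real) \<Rightarrow> bool" where
  "jfun N f \<longleftrightarrow> (\<exists>S. finite S \<and> S \<subseteq> {I. valid_midx N I} \<and> depends_only_on S f)
                 \<and> jet_smooth f"

definition xonly :: "(jet \<Rightarrow> real) \<Rightarrow> bool" where
  "xonly f \<longleftrightarrow> (\<forall>I\<in>jdep f. \<forall>k. k \<noteq> 1 \<longrightarrow> I k = 0)"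

definition TD :: "nat \<Rightarrow> (jet \<Rightarrow> real) \<Rightarrow> jet \<Rightarrow> real" where
  "TD i f = (\<lambda>z. \<Sum>I\<in>jdep f. z (shift_midx i I) * pd I f z)"

definition TDm :: "nat \<Rightarrow> midx \<Rightarrow> (jet \<Rightarrow> real) \<Rightarrow> jet \<Rightarrow> real" where
  "TDm N I f = foldr (\<lambda>k g. (TD k ^^ I k) g) [1..<Suc N] f"

definition prol :: "nat \<Rightarrow> (jet \<Rightarrow> real) \<Rightarrow> (jet \<Rightarrow> real) \<Rightarrow> jet \<Rightarrow> real" where
  "prol N Q f = (\<lambda>z. \<Sum>I\<in>jdep f. TDm N I Q z * pd I f z)"

definition plane_midx :: "nat \<Rightarrow> nat \<Rightarrow> midx \<Rightarrow> nat \<Rightarrow> nat \<Rightarrow> midx" where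
  "plane_midx i j I a b = I(i := I i + a, j := I j + b)"

definition vard :: "nat \<Rightarrow> nat \<Rightarrow> (jet \<Rightarrow> real) \<Rightarrow> midx \<Rightarrow> jet \<Rightarrow> real" where
  "vard i j L I = (\<lambda>z. \<Sum>(a,b)\<in>{(a,b). plane_midx i j I a b \<in> jdep L}.
       (-1) ^ (a + b) * (TD i ^^ a) ((TD j ^^ b) (pd (plane_midx i j I a b) L)) z)"

text \<open>jet points lying on (the infinite prolongation of) solutions of u_{t_i} = Q_i, i=2..N:
  u_{I t_i} = D_I Q_i for all multi-indices I\<close>
definition on_solutions :: "nat \<Rightarrow> (nat \<Rightarrow> jet \<Rightarrow> real) \<Rightarrow> jet \<Rightarrow> bool" where
  "on_solutions N Q z \<longleftrightarrow>
     (\<forall>i\<in>{2..N}. \<forall>I. valid_midx N I \<longrightarrow> z (shift_midx i I) = TDm N I (Q i) z)"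

definition lag :: "(jet \<Rightarrow> real) \<Rightarrow> (nat \<Rightarrow> jet \<Rightarrow> real) \<Rightarrow> nat \<Rightarrow> jet \<Rightarrow> real" where
  "lag p h i = (\<lambda>z. p z * z (unit_midx i) - h i z)"

definition xop :: "nat \<Rightarrow> (nat \<Rightarrow> jet \<Rightarrow> real) \<Rightarrow> (jet \<Rightarrow> real) \<Rightarrow> jet \<Rightarrow> real" where
  "xop n a g = (\<lambda>z. \<Sum>k<n. a k z * (TD 1 ^^ k) g z)"

end

theory Submission
  imports Defs
begin

declare One_nat_def [simp del]

definition X0 :: "midx set" where "X0 = {I. \<forall>k. k \<noteq> 1 \<longrightarrow> I k = 0}"
definition xm :: "nat \<Rightarrow> midx" where "xm c = (\<lambda>k. if k = 1 then c else 0)"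
definition pj :: "jet \<Rightarrow> jet" where "pj z = (\<lambda>I. if I \<in> X0 then z I else 0)"
definition pdiff :: "(jet \<Rightarrow> real) \<Rightarrow> bool" where
  "pdiff f \<longleftrightarrow> (\<forall>I z. (\<lambda>s. f (z(I := s))) differentiable (at (z I)))"
definition CC :: "(jet \<Rightarrow> real) \<Rightarrow> bool" where
  "CC f \<longleftrightarrow> continuous_on UNIV f \<and> pdiff f"
definition der :: "(midx \<Rightarrow> jet \<Rightarrow> real) \<Rightarrow> (jet \<Rightarrow> real) \<Rightarrow> jet \<Rightarrow> real" where
  "der c f = (\<lambda>z. \<Sum>I\<in>jdep f. c I z * pd I f z)"
definition ok :: "(jet \<Rightarrow> real) \<Rightarrow> bool" where
  "ok f \<longleftrightarrow> finite (jdep f) \<and> jet_smooth f"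

lemma TD_der: "TD k f = der (\<lambda>I z. z (shift_midx k I)) f"
  by (simp add: TD_def der_def)
lemma prol_der: "prol N Q f = der (\<lambda>I. TDm N I Q) f"
  by (simp add: prol_def der_def)

lemma js_iff: "jet_smooth f \<longleftrightarrow> (\<forall>Is. CC (pds Is f))"
  unfolding jet_smooth_def CC_def pdiff_def by (simp add: conj_commute)

lemma rdiff_fdiff: "(f::real\<Rightarrow>real) differentiable at x \<longleftrightarrow> f field_differentiable at x"
  by (simp only: DERIV_deriv_iff_real_differentiable[symmetric] DERIV_deriv_iff_field_differentiable[symmetric])

lemma pdiffD: "pdiff f \<Longrightarrow> (\<lambda>s. f (z(I := s))) field_differentiable (at (z I))"
  by (simp add: pdiff_def rdiff_fdiff[symmetric])

lemma jdepD: "I \<notin> jdep f \<Longrightarrow> f (z(I := s)) = f z"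
  by (auto simp: jdep_def)

lemma pd_notin: "I \<notin> jdep f \<Longrightarrow> pd I f = (\<lambda>z. 0)"
  by (rule ext) (simp add: pd_def jdepD)

lemma jdep_sub: "depends_only_on S f \<Longrightarrow> jdep f \<subseteq> S"
proof
  fix I assume d: "depends_only_on S f" and I: "I \<in> jdep f"
  then obtain z s where ne: "f (z(I:=s)) \<noteq> f z" by (auto simp: jdep_def)
  show "I \<in> S"
  proof (rule ccontr)
    assume "I \<notin> S"
    then have "\<forall>K\<in>S. (z(I:=s)) K = z K" by auto
    then have "f (z(I:=s)) = f z" using d unfolding depends_only_on_def by blast
    then show False using ne by simp
  qed
qed

lemma jdep_op: "jdep (\<lambda>z. F (f z) (g z)) \<subseteq> jdep f \<union> jdep g"
proof
  fix I assume I: "I \<in> jdep (\<lambda>z. F (f z) (g z))"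
  show "I \<in> jdep f \<union> jdep g"
  proof (rule ccontr)
    assume "I \<notin> jdep f \<union> jdep g"
    then have "\<forall>z s. F (f (z(I:=s))) (g (z(I:=s))) = F (f z) (g z)" by (simp add: jdepD)
    then show False using I by (simp add: jdep_def)
  qed
qed

lemma jdep_op1: "jdep (\<lambda>z. F (f z)) \<subseteq> jdep f"
proof
  fix I assume I: "I \<in> jdep (\<lambda>z. F (f z))"
  show "I \<in> jdep f"
  proof (rule ccontr)
    assume "I \<notin> jdep f"
    then have "\<forall>z s. F (f (z(I:=s))) = F (f z)" by (simp add: jdepD)
    then show False using I by (simp add: jdep_def)
  qed
qed

lemma jdep_const: "jdep (\<lambda>z. c) = {}"
  unfolding jdep_def by auto

lemma jdep_crd: "jdep (\<lambda>z. z J) \<subseteq> {J}"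
  unfolding jdep_def by auto

lemma jdep_sum: "jdep (\<lambda>z. \<Sum>a\<in>A. f a z) \<subseteq> (\<Union>a\<in>A. jdep (f a))"
proof
  fix I assume I: "I \<in> jdep (\<lambda>z. \<Sum>a\<in>A. f a z)"
  show "I \<in> (\<Union>a\<in>A. jdep (f a))"
  proof (rule ccontr)
    assume "I \<notin> (\<Union>a\<in>A. jdep (f a))"
    then have "\<forall>z s. (\<Sum>a\<in>A. f a (z(I:=s))) = (\<Sum>a\<in>A. f a z)"
      by (auto intro!: sum.cong simp: jdepD)
    then show False using I by (simp add: jdep_def)
  qed
qed

lemma jdep_pd: "jdep (pd I f) \<subseteq> jdep f"
proof
  fix J assume J: "J \<in> jdep (pd I f)"
  show "J \<in> jdep f"
  proof (rule ccontr)
    assume nJ: "J \<notin> jdep f"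
    have "pd I f (z(J:=t)) = pd I f z" for z t
    proof (cases "J = I")
      case True
      then show ?thesis using nJ by (simp add: pd_notin)
    next
      case False
      have "f (z(J:=t, I:=s)) = f (z(I:=s))" for s
      proof -
        have "z(J:=t, I:=s) = z(I:=s, J:=t)" using False by (rule fun_upd_twist)
        then show ?thesis using jdepD[OF nJ, of "z(I:=s)" t] by simp
      qed
      then have "(\<lambda>s. f (z(J:=t, I:=s))) = (\<lambda>s. f (z(I:=s)))" by simp
      then show ?thesis using False by (simp add: pd_def)
    qed
    then show False using J by (auto simp: jdep_def)
  qed
qed

lemma der_sup: "finite S \<Longrightarrow> jdep f \<subseteq> S \<Longrightarrow> der c f z = (\<Sum>I\<in>S. c I z * pd I f z)"
  unfolding der_def
  by (rule sum.mono_neutral_left) (simp_all add: pd_notin)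

lemma jdep_der: "jdep (der c f) \<subseteq> jdep f \<union> (\<Union>I\<in>jdep f. jdep (c I))"
proof -
  have "jdep (der c f) \<subseteq> (\<Union>I\<in>jdep f. jdep (\<lambda>z. c I z * pd I f z))"
    unfolding der_def by (rule jdep_sum)
  also have "\<dots> \<subseteq> (\<Union>I\<in>jdep f. jdep (c I) \<union> jdep (pd I f))"
    using jdep_op[of "\<lambda>x y. x * y"] by (intro UN_mono) auto
  also have "\<dots> \<subseteq> jdep f \<union> (\<Union>I\<in>jdep f. jdep (c I))"
    using jdep_pd by blast
  finally show ?thesis .
qed

lemma jdep_TD: "jdep (TD k f) \<subseteq> jdep f \<union> shift_midx k ` jdep f"
proof -
  have "jdep (\<lambda>z. z (shift_midx k I)) \<subseteq> {shift_midx k I}" for I by (rule jdep_crd)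
  then show ?thesis unfolding TD_der using jdep_der[of "\<lambda>I z. z (shift_midx k I)" f] by blast
qed

lemma pd_add: "pdiff f \<Longrightarrow> pdiff g \<Longrightarrow> pd I (\<lambda>z. f z + g z) = (\<lambda>z. pd I f z + pd I g z)"
  by (rule ext) (simp add: pd_def pdiffD)
lemma pd_diff: "pdiff f \<Longrightarrow> pdiff g \<Longrightarrow> pd I (\<lambda>z. f z - g z) = (\<lambda>z. pd I f z - pd I g z)"
  by (rule ext) (simp add: pd_def pdiffD)
lemma pd_mult: "pdiff f \<Longrightarrow> pdiff g \<Longrightarrow> pd I (\<lambda>z. f z * g z) = (\<lambda>z. pd I f z * g z + f z * pd I g z)"
  by (rule ext) (simp add: pd_def pdiffD)
lemma pd_const: "pd I (\<lambda>z. c) = (\<lambda>z. 0)"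
  by (rule ext) (simp add: pd_def)
lemma pd_crd: "pd I (\<lambda>z. z J) = (\<lambda>z. if I = J then 1 else 0)"
  by (rule ext) (auto simp: pd_def)

lemma pdiff_add: "pdiff f \<Longrightarrow> pdiff g \<Longrightarrow> pdiff (\<lambda>z. f z + g z)"
  unfolding pdiff_def by (auto intro: differentiable_add)
lemma pdiff_diff: "pdiff f \<Longrightarrow> pdiff g \<Longrightarrow> pdiff (\<lambda>z. f z - g z)"
  unfolding pdiff_def by (auto intro: differentiable_diff)
lemma pdiff_mult: "pdiff f \<Longrightarrow> pdiff g \<Longrightarrow> pdiff (\<lambda>z. f z * g z)"
  unfolding pdiff_def by (auto intro: differentiable_mult)
lemma pdiff_const: "pdiff (\<lambda>z. c)"
  unfolding pdiff_def by simp
lemma pdiff_crd: "pdiff (\<lambda>z. z J)"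
  unfolding pdiff_def
proof (intro allI)
  fix I z
  show "(\<lambda>s. (z(I := s)) J) differentiable at (z I)"
    by (cases "I = J") auto
qed

lemma CC_add: "CC f \<Longrightarrow> CC g \<Longrightarrow> CC (\<lambda>z. f z + g z)"
  unfolding CC_def by (auto intro: continuous_on_add pdiff_add)
lemma CC_diff: "CC f \<Longrightarrow> CC g \<Longrightarrow> CC (\<lambda>z. f z - g z)"
  unfolding CC_def by (auto intro: continuous_on_diff pdiff_diff)
lemma CC_mult: "CC f \<Longrightarrow> CC g \<Longrightarrow> CC (\<lambda>z. f z * g z)"
  unfolding CC_def by (auto intro: continuous_on_mult pdiff_mult)
lemma CC_const: "CC (\<lambda>z. c)"
  unfolding CC_def by (auto intro: pdiff_const)
lemma CC_crd: "CC (\<lambda>z. z J)"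
  unfolding CC_def by (auto intro: pdiff_crd)


lemma pds_snoc: "pds (Is @ [I]) f = pds Is (pd I f)"
  by (induction Is) auto

lemma js_CC: "jet_smooth f \<Longrightarrow> CC (pds Is f)" by (simp add: js_iff)
lemma js_pdiff: "jet_smooth f \<Longrightarrow> pdiff f" using js_CC[of f "[]"] by (simp add: CC_def)
lemma js_cont: "jet_smooth f \<Longrightarrow> continuous_on UNIV f" using js_CC[of f "[]"] by (simp add: CC_def)
lemma js_pd: "jet_smooth f \<Longrightarrow> jet_smooth (pd I f)"
  unfolding js_iff by (metis pds_snoc)

lemma pds_add: "(\<And>Ks. length Ks < length Js \<Longrightarrow> pdiff (pds Ks F) \<and> pdiff (pds Ks G)) \<Longrightarrow>
   pds Js (\<lambda>z. F z + G z) = (\<lambda>z. pds Js F z + pds Js G z)"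
proof (induction Js)
  case Nil show ?case by simp
next
  case (Cons J Js)
  have "pds Js (\<lambda>z. F z + G z) = (\<lambda>z. pds Js F z + pds Js G z)"
    using Cons.prems by (intro Cons.IH) auto
  moreover have "pdiff (pds Js F)" "pdiff (pds Js G)" using Cons.prems[of Js] by auto
  ultimately show ?case by (simp add: pd_add)
qed

lemma pds_diff: "(\<And>Ks. length Ks < length Js \<Longrightarrow> pdiff (pds Ks F) \<and> pdiff (pds Ks G)) \<Longrightarrow>
   pds Js (\<lambda>z. F z - G z) = (\<lambda>z. pds Js F z - pds Js G z)"
proof (induction Js)
  case Nil show ?case by simp
next
  case (Cons J Js)
  have "pds Js (\<lambda>z. F z - G z) = (\<lambda>z. pds Js F z - pds Js G z)"
    using Cons.prems by (intro Cons.IH) auto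
  moreover have "pdiff (pds Js F)" "pdiff (pds Js G)" using Cons.prems[of Js] by auto
  ultimately show ?case by (simp add: pd_diff)
qed

lemma pds_const: "pds Is (\<lambda>z. c) = (if Is = [] then (\<lambda>z. c) else (\<lambda>z. 0))"
  by (induction Is) (auto simp: pd_const)

lemma js_const: "jet_smooth (\<lambda>z. c)"
  unfolding js_iff
proof
  fix Is show "CC (pds Is (\<lambda>z. c))" by (cases "Is = []") (simp_all add: pds_const CC_const)
qed

lemma js_add: "jet_smooth f \<Longrightarrow> jet_smooth g \<Longrightarrow> jet_smooth (\<lambda>z. f z + g z)"
  unfolding js_iff
proof
  fix Is assume f: "\<forall>Is. CC (pds Is f)" and g: "\<forall>Is. CC (pds Is g)"
  have "pds Is (\<lambda>z. f z + g z) = (\<lambda>z. pds Is f z + pds Is g z)"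
    using f g by (intro pds_add) (simp add: CC_def)
  then show "CC (pds Is (\<lambda>z. f z + g z))" using f g by (simp add: CC_add)
qed

lemma js_diff: "jet_smooth f \<Longrightarrow> jet_smooth g \<Longrightarrow> jet_smooth (\<lambda>z. f z - g z)"
  unfolding js_iff
proof
  fix Is assume f: "\<forall>Is. CC (pds Is f)" and g: "\<forall>Is. CC (pds Is g)"
  have "pds Is (\<lambda>z. f z - g z) = (\<lambda>z. pds Is f z - pds Is g z)"
    using f g by (intro pds_diff) (simp add: CC_def)
  then show "CC (pds Is (\<lambda>z. f z - g z))" using f g by (simp add: CC_diff)
qed

lemma js_crd: "jet_smooth (\<lambda>z. z J)"
  unfolding js_iff
proof
  fix Is show "CC (pds Is (\<lambda>z. z J))"
  proof (cases Is rule: rev_cases)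
    case Nil then show ?thesis by (simp add: CC_crd)
  next
    case (snoc Js I)
    have "pds Is (\<lambda>z. z J) = pds Js (\<lambda>z. if I = J then 1 else 0)"
      using snoc by (simp add: pds_snoc pd_crd)
    moreover have "CC (pds Js (\<lambda>z. if I = J then 1 else 0))" by (rule js_CC[OF js_const])
    ultimately show ?thesis by simp
  qed
qed

lemma js_mult_aux:
  "length Is = n \<Longrightarrow> jet_smooth f \<Longrightarrow> jet_smooth g \<Longrightarrow> CC (pds Is (\<lambda>z. f z * g z))"
proof (induction n arbitrary: Is f g rule: less_induct)
  case (less n)
  show ?case
  proof (cases Is rule: rev_cases)
    case Nil
    then show ?thesis using less.prems js_CC[of f "[]"] js_CC[of g "[]"] by (simp add: CC_mult)
  next
    case (snoc Js I)
    have ln: "length Js < n" using less.prems snoc by simp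
    have jf: "jet_smooth (pd I f)" "jet_smooth (pd I g)" using less.prems js_pd by auto
    have IH: "CC (pds Ks (\<lambda>z. pd I f z * g z)) \<and> CC (pds Ks (\<lambda>z. f z * pd I g z))"
      if "length Ks \<le> length Js" for Ks
    proof -
      have "length Ks < n" using that ln by simp
      then show ?thesis using less.IH[of "length Ks" Ks] jf less.prems by blast
    qed
    have e1: "pds Is (\<lambda>z. f z * g z) = pds Js (\<lambda>z. pd I f z * g z + f z * pd I g z)"
      using snoc less.prems by (simp add: pds_snoc pd_mult js_pdiff)
    have e2: "pds Js (\<lambda>z. pd I f z * g z + f z * pd I g z)
       = (\<lambda>z. pds Js (\<lambda>z. pd I f z * g z) z + pds Js (\<lambda>z. f z * pd I g z) z)"
      by (rule pds_add) (use IH in \<open>auto simp: CC_def\<close>)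
    show ?thesis unfolding e1 e2 using IH[of Js] by (simp add: CC_add)
  qed
qed

lemma js_mult: "jet_smooth f \<Longrightarrow> jet_smooth g \<Longrightarrow> jet_smooth (\<lambda>z. f z * g z)"
  unfolding js_iff[of "\<lambda>z. f z * g z"]
proof
  fix Is assume "jet_smooth f" "jet_smooth g"
  then show "CC (pds Is (\<lambda>z. f z * g z))" by (rule js_mult_aux[OF refl])
qed

lemma js_sum: "finite A \<Longrightarrow> (\<And>a. a \<in> A \<Longrightarrow> jet_smooth (f a)) \<Longrightarrow> jet_smooth (\<lambda>z. \<Sum>a\<in>A. f a z)"
proof (induction A rule: finite_induct)
  case empty then show ?case by (simp add: js_const)
next
  case (insert x F)
  have "(\<lambda>z. \<Sum>a\<in>insert x F. f a z) = (\<lambda>z. f x z + (\<Sum>a\<in>F. f a z))"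
    using insert by simp
  then show ?case using insert by (simp add: js_add)
qed

lemma js_TD: "finite (jdep f) \<Longrightarrow> jet_smooth f \<Longrightarrow> jet_smooth (TD k f)"
  unfolding TD_def by (intro js_sum js_mult js_crd js_pd) auto

lemma dep_mono: "S \<subseteq> T \<Longrightarrow> depends_only_on S f \<Longrightarrow> depends_only_on T f"
  unfolding depends_only_on_def by (meson subsetD)
lemma dep_op: "depends_only_on S f \<Longrightarrow> depends_only_on S g \<Longrightarrow> depends_only_on S (\<lambda>z. F (f z) (g z))"
  unfolding depends_only_on_def
proof (intro allI impI)
  fix z z' :: jet
  assume f: "\<forall>z z'. (\<forall>I\<in>S. z I = z' I) \<longrightarrow> f z = f z'" and g: "\<forall>z z'. (\<forall>I\<in>S. z I = z' I) \<longrightarrow> g z = g z'"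
    and e: "\<forall>I\<in>S. z I = z' I"
  have "f z = f z'" using f e by blast
  moreover have "g z = g z'" using g e by blast
  ultimately show "F (f z) (g z) = F (f z') (g z')" by simp
qed
lemma dep_const: "depends_only_on S (\<lambda>z. c)"
  unfolding depends_only_on_def by simp
lemma dep_crd: "J \<in> S \<Longrightarrow> depends_only_on S (\<lambda>z. z J)"
  unfolding depends_only_on_def by simp
lemma dep_sum: "(\<And>a. a \<in> A \<Longrightarrow> depends_only_on S (f a)) \<Longrightarrow> depends_only_on S (\<lambda>z. \<Sum>a\<in>A. f a z)"
  unfolding depends_only_on_def
proof (intro allI impI)
  fix z z' :: jet assume h: "\<And>a. a \<in> A \<Longrightarrow> \<forall>z z'. (\<forall>I\<in>S. z I = z' I) \<longrightarrow> f a z = f a z'"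
    and e: "\<forall>I\<in>S. z I = z' I"
  show "(\<Sum>a\<in>A. f a z) = (\<Sum>a\<in>A. f a z')" using h e by (intro sum.cong) auto
qed

lemma dep_pd: "depends_only_on S f \<Longrightarrow> depends_only_on S (pd I f)"
proof (cases "I \<in> S")
  case True
  assume d: "depends_only_on S f"
  show ?thesis unfolding depends_only_on_def
  proof (intro allI impI)
    fix z z' :: jet assume e: "\<forall>K\<in>S. z K = z' K"
    have "(\<lambda>s. f (z(I:=s))) = (\<lambda>s. f (z'(I:=s)))"
    proof
      fix s have "\<forall>K\<in>S. (z(I:=s)) K = (z'(I:=s)) K" using e by simp
      then show "f (z(I:=s)) = f (z'(I:=s))" using d unfolding depends_only_on_def by blast
    qed
    moreover have "z I = z' I" using e True by simp
    ultimately show "pd I f z = pd I f z'" by (simp add: pd_def)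
  qed
next
  case False
  assume d: "depends_only_on S f"
  then have "I \<notin> jdep f" using jdep_sub False by blast
  then show ?thesis by (simp add: pd_notin dep_const)
qed

lemma dep_der: "depends_only_on S f \<Longrightarrow> (\<And>I. I \<in> S \<Longrightarrow> depends_only_on T (c I)) \<Longrightarrow> S \<subseteq> T
  \<Longrightarrow> depends_only_on T (der c f)"
  unfolding der_def
proof (rule dep_sum)
  fix I assume d: "depends_only_on S f" and c: "\<And>I. I \<in> S \<Longrightarrow> depends_only_on T (c I)"
    and ST: "S \<subseteq> T" and I: "I \<in> jdep f"
  have "I \<in> S" using I jdep_sub[OF d] by blast
  have "depends_only_on T (c I)" using c \<open>I \<in> S\<close> by blast
  moreover have "depends_only_on T (pd I f)" using dep_mono[OF ST dep_pd[OF d]] .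
  ultimately show "depends_only_on T (\<lambda>z. c I z * pd I f z)"
    by (rule dep_op[where F="\<lambda>x y. x * y"])
qed

lemma dep_TD: "depends_only_on S f \<Longrightarrow> depends_only_on (S \<union> shift_midx k ` S) (TD k f)"
  unfolding TD_der
proof (rule dep_der)
  fix I assume "I \<in> S"
  then show "depends_only_on (S \<union> shift_midx k ` S) (\<lambda>z. z (shift_midx k I))" by (intro dep_crd) blast
qed auto

lemma dep_pj: "depends_only_on S A \<Longrightarrow> depends_only_on S (\<lambda>z. A (pj z))"
  unfolding depends_only_on_def
proof (intro allI impI)
  fix z z' :: jet assume A: "\<forall>z z'. (\<forall>I\<in>S. z I = z' I) \<longrightarrow> A z = A z'" and e: "\<forall>I\<in>S. z I = z' I"
  then have "\<forall>I\<in>S. pj z I = pj z' I" by (simp add: pj_def)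
  then show "A (pj z) = A (pj z')" using A by blast
qed

lemma dox_pj: "depends_only_on X0 (\<lambda>z. A (pj z))"
  unfolding depends_only_on_def
proof (intro allI impI)
  fix z z' :: jet assume "\<forall>I\<in>X0. z I = z' I"
  then have "pj z = pj z'" by (auto simp: pj_def)
  then show "A (pj z) = A (pj z')" by simp
qed


lemma pj_upd: "pj (z(I := s)) = (if I \<in> X0 then (pj z)(I := s) else pj z)"
  by (rule ext) (auto simp: pj_def)

lemma pj_X0: "I \<in> X0 \<Longrightarrow> pj z I = z I" by (simp add: pj_def)
lemma pj_nX0: "I \<notin> X0 \<Longrightarrow> pj z I = 0" by (simp add: pj_def)

lemma pd_pj: "pd I (\<lambda>z. G (pj z)) = (\<lambda>z. if I \<in> X0 then pd I G (pj z) else 0)"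
proof (rule ext)
  fix z
  show "pd I (\<lambda>z. G (pj z)) z = (if I \<in> X0 then pd I G (pj z) else 0)"
  proof (cases "I \<in> X0")
    case True
    then have "(\<lambda>s. G (pj (z(I := s)))) = (\<lambda>s. G ((pj z)(I := s)))" by (simp add: pj_upd)
    then show ?thesis using True by (simp add: pd_def pj_X0)
  next
    case False
    then have "(\<lambda>s. G (pj (z(I := s)))) = (\<lambda>s. G (pj z))" by (simp add: pj_upd)
    then show ?thesis using False by (simp add: pd_def)
  qed
qed

lemma pds_pj: "pds Is (\<lambda>z. A (pj z)) = (if set Is \<subseteq> X0 then (\<lambda>z. pds Is A (pj z)) else (\<lambda>z. 0))"
proof (induction Is)
  case Nil then show ?case by simp
next
  case (Cons J Js)
  show ?case
  proof (cases "set Js \<subseteq> X0")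
    case True
    then show ?thesis using Cons by (simp add: pd_pj)
  next
    case False
    then show ?thesis using Cons by (simp add: pd_const)
  qed
qed

lemma cont_pj: "continuous_on UNIV pj"
proof (rule continuous_on_coordinatewise_then_product)
  fix I
  show "continuous_on UNIV (\<lambda>z. pj z I)"
    by (cases "I \<in> X0") (simp_all add: pj_def)
qed

lemma CC_pj: "CC G \<Longrightarrow> CC (\<lambda>z. G (pj z))"
  unfolding CC_def
proof (intro conjI)
  assume G: "continuous_on UNIV G \<and> pdiff G"
  have "continuous_on UNIV (G \<circ> pj)"
    using continuous_on_compose[OF cont_pj, of G] G continuous_on_subset by blast
  then show "continuous_on UNIV (\<lambda>z. G (pj z))" by (simp add: o_def)
  show "pdiff (\<lambda>z. G (pj z))" unfolding pdiff_def
  proof (intro allI)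
    fix I z
    show "(\<lambda>s. G (pj (z(I := s)))) differentiable at (z I)"
    proof (cases "I \<in> X0")
      case True
      then have e: "(\<lambda>s. G (pj (z(I := s)))) = (\<lambda>s. G ((pj z)(I := s)))" by (simp add: pj_upd)
      have "(\<lambda>s. G ((pj z)(I := s))) differentiable at (pj z I)" using G by (simp add: pdiff_def)
      then show ?thesis using True e by (simp add: pj_X0)
    next
      case False
      then have "(\<lambda>s. G (pj (z(I := s)))) = (\<lambda>s. G (pj z))" by (simp add: pj_upd)
      then show ?thesis by simp
    qed
  qed
qed

lemma js_pj: "jet_smooth A \<Longrightarrow> jet_smooth (\<lambda>z. A (pj z))"
  unfolding js_iff
proof
  fix Is assume A: "\<forall>Is. CC (pds Is A)"
  show "CC (pds Is (\<lambda>z. A (pj z)))"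
    by (cases "set Is \<subseteq> X0") (simp_all add: pds_pj CC_pj A CC_const)
qed

lemma jdep_pj: "jdep (\<lambda>z. A (pj z)) \<subseteq> jdep A"
proof
  fix I assume I: "I \<in> jdep (\<lambda>z. A (pj z))"
  show "I \<in> jdep A"
  proof (rule ccontr)
    assume nI: "I \<notin> jdep A"
    have "A (pj (z(I:=s))) = A (pj z)" for z s
      using nI by (simp add: pj_upd jdepD)
    then show False using I by (simp add: jdep_def)
  qed
qed

definition fdep :: "nat \<Rightarrow> (jet \<Rightarrow> real) \<Rightarrow> bool" where
  "fdep N f \<longleftrightarrow> (\<exists>S. finite S \<and> S \<subseteq> {I. valid_midx N I} \<and> depends_only_on S f)"

lemma jfun_iff: "jfun N f \<longleftrightarrow> fdep N f \<and> jet_smooth f" by (simp add: jfun_def fdep_def)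

lemma fdep_op: "fdep N f \<Longrightarrow> fdep N g \<Longrightarrow> fdep N (\<lambda>z. F (f z) (g z))"
proof -
  assume "fdep N f" "fdep N g"
  then obtain S T where S: "finite S" "S \<subseteq> {I. valid_midx N I}" "depends_only_on S f"
    and T: "finite T" "T \<subseteq> {I. valid_midx N I}" "depends_only_on T g" unfolding fdep_def by blast
  have "depends_only_on (S \<union> T) f" by (rule dep_mono[OF _ S(3)]) auto
  moreover have "depends_only_on (S \<union> T) g" by (rule dep_mono[OF _ T(3)]) auto
  ultimately have "depends_only_on (S \<union> T) (\<lambda>z. F (f z) (g z))" by (rule dep_op)
  then show ?thesis unfolding fdep_def using S T by (intro exI[of _ "S \<union> T"]) auto
qed

lemma fdep_const: "fdep N (\<lambda>z. c)"
  unfolding fdep_def by (intro exI[of _ "{}"]) (simp add: dep_const)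

lemma fdep_crd: "valid_midx N J \<Longrightarrow> fdep N (\<lambda>z. z J)"
  unfolding fdep_def by (intro exI[of _ "{J}"]) (simp add: dep_crd)

lemma fdep_pd: "fdep N f \<Longrightarrow> fdep N (pd I f)"
proof -
  assume "fdep N f"
  then obtain S where S: "finite S" "S \<subseteq> {I. valid_midx N I}" "depends_only_on S f" unfolding fdep_def by blast
  show ?thesis unfolding fdep_def using S(1,2) dep_pd[OF S(3)] by blast
qed

lemma fdep_pj: "fdep N A \<Longrightarrow> fdep N (\<lambda>z. A (pj z))"
proof -
  assume "fdep N A"
  then obtain S where S: "finite S" "S \<subseteq> {I. valid_midx N I}" "depends_only_on S A" unfolding fdep_def by blast
  show ?thesis unfolding fdep_def using S(1,2) dep_pj[OF S(3)] by blast
qed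

lemma fdep_sum: "finite A \<Longrightarrow> (\<And>a. a \<in> A \<Longrightarrow> fdep N (f a)) \<Longrightarrow> fdep N (\<lambda>z. \<Sum>a\<in>A. f a z)"
proof (induction A rule: finite_induct)
  case empty then show ?case by (simp add: fdep_const)
next
  case (insert x F)
  have "(\<lambda>z. \<Sum>a\<in>insert x F. f a z) = (\<lambda>z. f x z + (\<Sum>a\<in>F. f a z))"
    using insert by simp
  moreover have "fdep N (\<lambda>z. f x z + (\<Sum>a\<in>F. f a z))"
    using insert by (intro fdep_op[where F="\<lambda>x y. x + y"]) auto
  ultimately show ?case by simp
qed

lemma valid_shift: "valid_midx N I \<Longrightarrow> 1 \<le> k \<Longrightarrow> k \<le> N \<Longrightarrow> valid_midx N (shift_midx k I)"
  unfolding valid_midx_def shift_midx_def by auto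

lemma fdep_TD: "1 \<le> k \<Longrightarrow> k \<le> N \<Longrightarrow> fdep N f \<Longrightarrow> fdep N (TD k f)"
proof -
  assume k: "1 \<le> k" "k \<le> N" and "fdep N f"
  then obtain S where S: "finite S" "S \<subseteq> {I. valid_midx N I}" "depends_only_on S f" unfolding fdep_def by blast
  have "depends_only_on (S \<union> shift_midx k ` S) (TD k f)" by (rule dep_TD[OF S(3)])
  moreover have "S \<union> shift_midx k ` S \<subseteq> {I. valid_midx N I}" using S(2) valid_shift k by auto
  moreover have "finite (S \<union> shift_midx k ` S)" using S(1) by simp
  ultimately show ?thesis unfolding fdep_def by blast
qed

lemma fdep_fin: "fdep N f \<Longrightarrow> finite (jdep f)"
proof -
  assume "fdep N f"
  then obtain S where S: "finite S" "depends_only_on S f" unfolding fdep_def by blast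
  show ?thesis using finite_subset[OF jdep_sub[OF S(2)] S(1)] .
qed

lemma fdep_valid: "fdep N f \<Longrightarrow> jdep f \<subseteq> {I. valid_midx N I}"
proof -
  assume "fdep N f"
  then obtain S where S: "finite S" "S \<subseteq> {I. valid_midx N I}" "depends_only_on S f" unfolding fdep_def by blast
  show ?thesis using jdep_sub[OF S(3)] S(2) by blast
qed

lemma jfun_ok: "jfun N f \<Longrightarrow> ok f"
  unfolding jfun_iff ok_def using fdep_fin by blast

lemma ok_js: "ok f \<Longrightarrow> jet_smooth f" by (simp add: ok_def)
lemma ok_fin: "ok f \<Longrightarrow> finite (jdep f)" by (simp add: ok_def)

lemma ok_add: "ok f \<Longrightarrow> ok g \<Longrightarrow> ok (\<lambda>z. f z + g z)"
  unfolding ok_def using jdep_op[of "\<lambda>x y. x + y" f g] finite_subset[of "jdep (\<lambda>z. f z + g z)" "jdep f \<union> jdep g"] js_add by blast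
lemma ok_diff: "ok f \<Longrightarrow> ok g \<Longrightarrow> ok (\<lambda>z. f z - g z)"
  unfolding ok_def using jdep_op[of "\<lambda>x y. x - y" f g] finite_subset[of "jdep (\<lambda>z. f z - g z)" "jdep f \<union> jdep g"] js_diff by blast
lemma ok_mult: "ok f \<Longrightarrow> ok g \<Longrightarrow> ok (\<lambda>z. f z * g z)"
  unfolding ok_def using jdep_op[of "\<lambda>x y. x * y" f g] finite_subset[of "jdep (\<lambda>z. f z * g z)" "jdep f \<union> jdep g"] js_mult by blast
lemma ok_const: "ok (\<lambda>z. c)"
  unfolding ok_def by (simp add: jdep_const js_const)
lemma ok_crd: "ok (\<lambda>z. z J)"
  unfolding ok_def using jdep_crd[of J] finite_subset[of "jdep (\<lambda>z. z J)" "{J}"] js_crd by blast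
lemma ok_pd: "ok f \<Longrightarrow> ok (pd I f)"
  unfolding ok_def using jdep_pd[of I f] finite_subset[of "jdep (pd I f)" "jdep f"] js_pd by blast
lemma ok_TD: "ok f \<Longrightarrow> ok (TD k f)"
  unfolding ok_def using jdep_TD[of k f] finite_subset[of "jdep (TD k f)" "jdep f \<union> shift_midx k ` jdep f"] js_TD by blast
lemma ok_pj: "ok A \<Longrightarrow> ok (\<lambda>z. A (pj z))"
  unfolding ok_def using jdep_pj[of A] finite_subset[of "jdep (\<lambda>z. A (pj z))" "jdep A"] js_pj by blast
lemma ok_sum: "finite A \<Longrightarrow> (\<And>a. a \<in> A \<Longrightarrow> ok (f a)) \<Longrightarrow> ok (\<lambda>z. \<Sum>a\<in>A. f a z)"
proof (induction A rule: finite_induct)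
  case empty then show ?case by (simp add: ok_const)
next
  case (insert x F)
  have "(\<lambda>z. \<Sum>a\<in>insert x F. f a z) = (\<lambda>z. f x z + (\<Sum>a\<in>F. f a z))"
    using insert by simp
  then show ?case using insert by (simp add: ok_add)
qed

lemma jfun_I: "fdep N f \<Longrightarrow> ok f \<Longrightarrow> jfun N f" by (simp add: jfun_iff ok_def)
lemma jfun_fdep: "jfun N f \<Longrightarrow> fdep N f" by (simp add: jfun_iff)

lemma jfun_add: "jfun N f \<Longrightarrow> jfun N g \<Longrightarrow> jfun N (\<lambda>z. f z + g z)"
proof -
  assume a: "jfun N f" "jfun N g"
  show ?thesis by (rule jfun_I[OF fdep_op[OF jfun_fdep[OF a(1)] jfun_fdep[OF a(2)]] ok_add[OF jfun_ok[OF a(1)] jfun_ok[OF a(2)]]])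
qed
lemma jfun_diff: "jfun N f \<Longrightarrow> jfun N g \<Longrightarrow> jfun N (\<lambda>z. f z - g z)"
proof -
  assume a: "jfun N f" "jfun N g"
  show ?thesis by (rule jfun_I[OF fdep_op[OF jfun_fdep[OF a(1)] jfun_fdep[OF a(2)]] ok_diff[OF jfun_ok[OF a(1)] jfun_ok[OF a(2)]]])
qed
lemma jfun_mult: "jfun N f \<Longrightarrow> jfun N g \<Longrightarrow> jfun N (\<lambda>z. f z * g z)"
proof -
  assume a: "jfun N f" "jfun N g"
  show ?thesis by (rule jfun_I[OF fdep_op[OF jfun_fdep[OF a(1)] jfun_fdep[OF a(2)]] ok_mult[OF jfun_ok[OF a(1)] jfun_ok[OF a(2)]]])
qed
lemma jfun_const: "jfun N (\<lambda>z. c)"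
  by (simp add: jfun_I fdep_const ok_const)
lemma jfun_crd: "valid_midx N J \<Longrightarrow> jfun N (\<lambda>z. z J)"
  by (simp add: jfun_I fdep_crd ok_crd)
lemma jfun_pd: "jfun N f \<Longrightarrow> jfun N (pd I f)"
  by (meson fdep_pd jfun_I jfun_fdep jfun_ok ok_pd)
lemma jfun_TD: "1 \<le> k \<Longrightarrow> k \<le> N \<Longrightarrow> jfun N f \<Longrightarrow> jfun N (TD k f)"
  by (meson fdep_TD jfun_I jfun_fdep jfun_ok ok_TD)
lemma jfun_pj: "jfun N A \<Longrightarrow> jfun N (\<lambda>z. A (pj z))"
  using fdep_pj jfun_I jfun_fdep jfun_ok ok_pj by blast
lemma jfun_sum: "finite A \<Longrightarrow> (\<And>a. a \<in> A \<Longrightarrow> jfun N (f a)) \<Longrightarrow> jfun N (\<lambda>z. \<Sum>a\<in>A. f a z)"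
proof -
  assume a: "finite A" "\<And>a. a \<in> A \<Longrightarrow> jfun N (f a)"
  have "fdep N (\<lambda>z. \<Sum>a\<in>A. f a z)" using a by (intro fdep_sum) (auto intro: jfun_fdep)
  moreover have "ok (\<lambda>z. \<Sum>a\<in>A. f a z)" using a by (intro ok_sum) (auto intro: jfun_ok)
  ultimately show ?thesis by (rule jfun_I)
qed


lemma der_add: "ok f \<Longrightarrow> ok g \<Longrightarrow> der c (\<lambda>z. f z + g z) = (\<lambda>z. der c f z + der c g z)"
proof (rule ext)
  fix z assume f: "ok f" and g: "ok g"
  let ?S = "jdep f \<union> jdep g"
  have fin: "finite ?S" using f g by (simp add: ok_fin)
  have "der c (\<lambda>z. f z + g z) z = (\<Sum>I\<in>?S. c I z * pd I (\<lambda>z. f z + g z) z)"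
    by (rule der_sup[OF fin jdep_op[of "\<lambda>x y. x + y"]])
  also have "\<dots> = (\<Sum>I\<in>?S. c I z * pd I f z) + (\<Sum>I\<in>?S. c I z * pd I g z)"
    using f g by (simp add: pd_add js_pdiff ok_js sum.distrib distrib_left)
  also have "\<dots> = der c f z + der c g z"
  proof -
    have "jdep f \<subseteq> ?S" "jdep g \<subseteq> ?S" by auto
    then show ?thesis using der_sup[OF fin] by simp
  qed
  finally show "der c (\<lambda>z. f z + g z) z = der c f z + der c g z" .
qed

lemma der_diff: "ok f \<Longrightarrow> ok g \<Longrightarrow> der c (\<lambda>z. f z - g z) = (\<lambda>z. der c f z - der c g z)"
proof (rule ext)
  fix z assume f: "ok f" and g: "ok g"
  let ?S = "jdep f \<union> jdep g"
  have fin: "finite ?S" using f g by (simp add: ok_fin)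
  have "der c (\<lambda>z. f z - g z) z = (\<Sum>I\<in>?S. c I z * pd I (\<lambda>z. f z - g z) z)"
    by (rule der_sup[OF fin jdep_op[of "\<lambda>x y. x - y"]])
  also have "\<dots> = (\<Sum>I\<in>?S. c I z * pd I f z) - (\<Sum>I\<in>?S. c I z * pd I g z)"
    using f g by (simp add: pd_diff js_pdiff ok_js sum_subtractf right_diff_distrib)
  also have "\<dots> = der c f z - der c g z"
  proof -
    have "jdep f \<subseteq> ?S" "jdep g \<subseteq> ?S" by auto
    then show ?thesis using der_sup[OF fin] by simp
  qed
  finally show "der c (\<lambda>z. f z - g z) z = der c f z - der c g z" .
qed

lemma der_mult: "ok f \<Longrightarrow> ok g \<Longrightarrow> der c (\<lambda>z. f z * g z) = (\<lambda>z. der c f z * g z + f z * der c g z)"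
proof (rule ext)
  fix z assume f: "ok f" and g: "ok g"
  let ?S = "jdep f \<union> jdep g"
  have fin: "finite ?S" using f g by (simp add: ok_fin)
  have "der c (\<lambda>z. f z * g z) z = (\<Sum>I\<in>?S. c I z * pd I (\<lambda>z. f z * g z) z)"
    by (rule der_sup[OF fin jdep_op[of "\<lambda>x y. x * y"]])
  also have "\<dots> = (\<Sum>I\<in>?S. c I z * pd I f z) * g z + f z * (\<Sum>I\<in>?S. c I z * pd I g z)"
    using f g by (simp add: pd_mult js_pdiff ok_js sum.distrib sum_distrib_left sum_distrib_right algebra_simps)
  also have "\<dots> = der c f z * g z + f z * der c g z"
  proof -
    have "jdep f \<subseteq> ?S" "jdep g \<subseteq> ?S" by auto
    then show ?thesis using der_sup[OF fin] by simp
  qed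
  finally show "der c (\<lambda>z. f z * g z) z = der c f z * g z + f z * der c g z" .
qed

lemma der_const: "der c (\<lambda>z. k) = (\<lambda>z. 0)"
  unfolding der_def jdep_const by simp

lemma der_crd: "der c (\<lambda>z. z J) = c J"
proof (rule ext)
  fix z
  have "der c (\<lambda>z. z J) z = (\<Sum>I\<in>{J}. c I z * pd I (\<lambda>z. z J) z)"
    by (rule der_sup[OF _ jdep_crd]) simp
  then show "der c (\<lambda>z. z J) z = c J z" by (simp add: pd_crd)
qed

lemma der_cmult: "ok f \<Longrightarrow> der c (\<lambda>z. k * f z) = (\<lambda>z. k * der c f z)"
  using der_mult[OF ok_const, of f c k] by (simp add: der_const)

lemma der_sum: "finite A \<Longrightarrow> (\<And>a. a \<in> A \<Longrightarrow> ok (f a)) \<Longrightarrow>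
  der c (\<lambda>z. \<Sum>a\<in>A. f a z) = (\<lambda>z. \<Sum>a\<in>A. der c (f a) z)"
proof (induction A rule: finite_induct)
  case empty then show ?case by (simp add: der_const)
next
  case (insert x F)
  have e: "(\<lambda>z. \<Sum>a\<in>insert x F. f a z) = (\<lambda>z. f x z + (\<Sum>a\<in>F. f a z))"
    using insert by simp
  have "ok (\<lambda>z. \<Sum>a\<in>F. f a z)" using insert by (intro ok_sum) auto
  then show ?case unfolding e using insert by (simp add: der_add)
qed

lemma TD_add: "ok f \<Longrightarrow> ok g \<Longrightarrow> TD k (\<lambda>z. f z + g z) = (\<lambda>z. TD k f z + TD k g z)"
  unfolding TD_der by (rule der_add)
lemma TD_diff: "ok f \<Longrightarrow> ok g \<Longrightarrow> TD k (\<lambda>z. f z - g z) = (\<lambda>z. TD k f z - TD k g z)"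
  unfolding TD_der by (rule der_diff)
lemma TD_mult: "ok f \<Longrightarrow> ok g \<Longrightarrow> TD k (\<lambda>z. f z * g z) = (\<lambda>z. TD k f z * g z + f z * TD k g z)"
  unfolding TD_der by (rule der_mult)
lemma TD_const: "TD k (\<lambda>z. c) = (\<lambda>z. 0)"
  unfolding TD_der by (rule der_const)
lemma TD_crd: "TD k (\<lambda>z. z J) = (\<lambda>z. z (shift_midx k J))"
  unfolding TD_der der_crd ..
lemma TD_cmult: "ok f \<Longrightarrow> TD k (\<lambda>z. c * f z) = (\<lambda>z. c * TD k f z)"
  unfolding TD_der by (rule der_cmult)
lemma TD_sum: "finite A \<Longrightarrow> (\<And>a. a \<in> A \<Longrightarrow> ok (f a)) \<Longrightarrow>
  TD k (\<lambda>z. \<Sum>a\<in>A. f a z) = (\<lambda>z. \<Sum>a\<in>A. TD k (f a) z)"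
  unfolding TD_der by (rule der_sum)

lemma prol_diff: "ok f \<Longrightarrow> ok g \<Longrightarrow> prol N Q (\<lambda>z. f z - g z) = (\<lambda>z. prol N Q f z - prol N Q g z)"
  unfolding prol_der by (rule der_diff)
lemma prol_mult: "ok f \<Longrightarrow> ok g \<Longrightarrow> prol N Q (\<lambda>z. f z * g z) = (\<lambda>z. prol N Q f z * g z + f z * prol N Q g z)"
  unfolding prol_der by (rule der_mult)
lemma prol_crd: "prol N Q (\<lambda>z. z J) = TDm N J Q"
  unfolding prol_der der_crd ..

lemma xm_X0: "xm c \<in> X0" by (simp add: X0_def xm_def)
lemma X0_xm: "I \<in> X0 \<Longrightarrow> I = xm (I 1)" by (rule ext) (auto simp: X0_def xm_def)
lemma shift_xm: "shift_midx 1 (xm c) = xm (Suc c)" by (rule ext) (simp add: shift_midx_def xm_def)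
lemma shift_nX0: "k \<noteq> 1 \<Longrightarrow> shift_midx k I \<notin> X0"
  unfolding X0_def shift_midx_def by auto
lemma shift1_X0: "I \<in> X0 \<Longrightarrow> shift_midx 1 I \<in> X0"
  unfolding X0_def shift_midx_def by auto
lemma shift1_X0': "shift_midx 1 I \<in> X0 \<Longrightarrow> I \<in> X0"
  unfolding X0_def shift_midx_def by (auto split: if_splits)
lemma unit_nX0: "j \<noteq> 1 \<Longrightarrow> unit_midx j \<notin> X0"
  unfolding X0_def unit_midx_def by auto
lemma valid_xm: "1 \<le> N \<Longrightarrow> valid_midx N (xm c)"
  unfolding valid_midx_def xm_def by auto
lemma inj_xm: "inj xm"
proof (rule injI)
  fix a b assume "xm a = xm b"
  then have "xm a 1 = xm b 1" by simp
  then show "a = b" by (simp add: xm_def)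
qed
lemma valid_unit: "1 \<le> j \<Longrightarrow> j \<le> N \<Longrightarrow> valid_midx N (unit_midx j)"
  unfolding valid_midx_def unit_midx_def by auto
lemma valid_zero: "valid_midx N zero_midx"
  unfolding valid_midx_def zero_midx_def by auto
lemma shift_zero: "shift_midx j zero_midx = unit_midx j"
  by (rule ext) (simp add: shift_midx_def zero_midx_def unit_midx_def)

lemma foldr_id: "(\<forall>k\<in>set ks. I k = 0) \<Longrightarrow> foldr (\<lambda>k g. (TD k ^^ I k) g) ks f = f"
  by (induction ks) auto

lemma TDm_zero: "TDm N zero_midx Q = Q"
  unfolding TDm_def by (rule foldr_id) (simp add: zero_midx_def)

lemma TDm_xm: "1 \<le> N \<Longrightarrow> TDm N (xm c) Q = (TD 1 ^^ c) Q"
proof -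
  assume N: "1 \<le> N"
  define F where "F = (\<lambda>k g. (TD k ^^ xm c k) g)"
  have e: "[1..<Suc N] = 1 # [Suc 1..<Suc N]" using N by (intro upt_conv_Cons) simp
  have a: "foldr F [Suc 1..<Suc N] Q = Q"
    unfolding F_def by (rule foldr_id) (simp add: xm_def)
  have "TDm N (xm c) Q = foldr F (1 # [Suc 1..<Suc N]) Q"
    unfolding TDm_def F_def[symmetric] e ..
  also have "\<dots> = F 1 (foldr F [Suc 1..<Suc N] Q)" by simp
  also have "\<dots> = (TD 1 ^^ c) Q" unfolding a by (simp add: F_def xm_def)
  finally show ?thesis .
qed

lemma TDm_unit: "1 \<le> j \<Longrightarrow> j \<le> N \<Longrightarrow> TDm N (unit_midx j) Q = TD j Q"
proof -
  assume j: "1 \<le> j" "j \<le> N"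
  define F where "F = (\<lambda>k g. (TD k ^^ unit_midx j k) g)"
  have jj: "j + (Suc N - j) = Suc N" using j by simp
  have "[1..<Suc N] = [1..<j] @ [j..<Suc N]"
    using upt_add_eq_append[of 1 j "Suc N - j"] j unfolding jj by simp
  also have "[j..<Suc N] = j # [Suc j..<Suc N]" using j by (simp add: upt_conv_Cons)
  finally have e: "[1..<Suc N] = [1..<j] @ j # [Suc j..<Suc N]" .
  have a: "foldr F [Suc j..<Suc N] Q = Q"
    unfolding F_def by (rule foldr_id) (simp add: unit_midx_def)
  have b: "foldr F [1..<j] G = G" for G
    unfolding F_def by (rule foldr_id) (simp add: unit_midx_def)
  have "TDm N (unit_midx j) Q = foldr F ([1..<j] @ j # [Suc j..<Suc N]) Q"
    unfolding TDm_def F_def[symmetric] e ..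
  also have "\<dots> = foldr F [1..<j] (F j (foldr F [Suc j..<Suc N] Q))" by simp
  also have "\<dots> = F j Q" unfolding a b ..
  also have "\<dots> = TD j Q" by (simp add: F_def unit_midx_def One_nat_def)
  finally show ?thesis .
qed

lemma TDp_ok: "ok f \<Longrightarrow> ok ((TD k ^^ a) f)"
  by (induction a) (auto simp: ok_TD)
lemma TDp_jfun: "1 \<le> k \<Longrightarrow> k \<le> N \<Longrightarrow> jfun N f \<Longrightarrow> jfun N ((TD k ^^ a) f)"
  by (induction a) (auto simp: jfun_TD)
lemma TDp_add: "ok f \<Longrightarrow> ok g \<Longrightarrow> (TD k ^^ a) (\<lambda>z. f z + g z) = (\<lambda>z. (TD k ^^ a) f z + (TD k ^^ a) g z)"
  by (induction a) (simp_all add: TD_add TDp_ok)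
lemma TDp_diff: "ok f \<Longrightarrow> ok g \<Longrightarrow> (TD k ^^ a) (\<lambda>z. f z - g z) = (\<lambda>z. (TD k ^^ a) f z - (TD k ^^ a) g z)"
  by (induction a) (simp_all add: TD_diff TDp_ok)
lemma TDp_const0: "(TD k ^^ a) (\<lambda>z. 0) = (\<lambda>z. 0)"
  by (induction a) (simp_all add: TD_const)
lemma TDp_crd: "(TD 1 ^^ a) (\<lambda>z. z J) = (\<lambda>z. z ((shift_midx 1 ^^ a) J))"
  by (induction a) (simp_all add: TD_crd)

lemma dox_TD1: "depends_only_on X0 f \<Longrightarrow> depends_only_on X0 (TD 1 f)"
proof -
  assume "depends_only_on X0 f"
  then have "depends_only_on (X0 \<union> shift_midx 1 ` X0) (TD 1 f)" by (rule dep_TD)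
  moreover have "X0 \<union> shift_midx 1 ` X0 \<subseteq> X0" using shift1_X0 by auto
  ultimately show ?thesis by (intro dep_mono[of "X0 \<union> shift_midx 1 ` X0" X0 "TD 1 f"])
qed

lemma dox_TDp: "depends_only_on X0 f \<Longrightarrow> depends_only_on X0 ((TD 1 ^^ a) f)"
proof (induction a)
  case 0 then show ?case by simp
next
  case (Suc a)
  have "(TD 1 ^^ Suc a) f = TD 1 ((TD 1 ^^ a) f)" by (simp only: funpow.simps o_apply)
  then show ?case using dox_TD1[OF Suc.IH[OF Suc.prems]] by simp
qed

lemma dox_eq: "depends_only_on X0 f \<Longrightarrow> (\<forall>J\<in>X0. w J = z J) \<Longrightarrow> f w = f z"
  unfolding depends_only_on_def by (erule allE[of _ w], erule allE[of _ z]) simp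

lemma dep_jdep_aux: "finite D \<Longrightarrow> (\<forall>I\<in>D. I \<notin> jdep f) \<Longrightarrow>
   f (\<lambda>I. if I \<in> D then v I else w I) = f w"
proof (induction D rule: finite_induct)
  case empty then show ?case by simp
next
  case (insert x D)
  have "(\<lambda>I. if I \<in> insert x D then v I else w I) = (\<lambda>I. if I \<in> D then v I else w I)(x := v x)"
    by (rule ext) auto
  then have "f (\<lambda>I. if I \<in> insert x D then v I else w I) = f (\<lambda>I. if I \<in> D then v I else w I)"
    using insert.prems by (simp add: jdepD)
  then show ?case using insert by simp
qed

lemma dep_jdep: "finite S \<Longrightarrow> depends_only_on S f \<Longrightarrow> depends_only_on (jdep f) f"
  unfolding depends_only_on_def
proof (intro allI impI)
  fix z z' :: jet
  assume S: "finite S" and d: "\<forall>z z'. (\<forall>I\<in>S. z I = z' I) \<longrightarrow> f z = f z'"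
    and e: "\<forall>I\<in>jdep f. z I = z' I"
  define D where "D = {I\<in>S. z I \<noteq> z' I}"
  have fD: "finite D" using S by (simp add: D_def)
  have nD: "\<forall>I\<in>D. I \<notin> jdep f" using e by (auto simp: D_def)
  have 1: "f (\<lambda>I. if I \<in> D then z' I else z I) = f z" by (rule dep_jdep_aux[OF fD nD])
  have "\<forall>I\<in>S. (\<lambda>I. if I \<in> D then z' I else z I) I = z' I" by (auto simp: D_def)
  then have 2: "f (\<lambda>I. if I \<in> D then z' I else z I) = f z'"
    using d by (elim allE[of _ "\<lambda>I. if I \<in> D then z' I else z I"] allE[of _ z']) simp
  show "f z = f z'" using 1 2 by simp
qed

lemma xonly_dox: "jfun N f \<Longrightarrow> xonly f \<Longrightarrow> depends_only_on X0 f"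
proof -
  assume j: "jfun N f" and x: "xonly f"
  then obtain S where S: "finite S" "depends_only_on S f" unfolding jfun_def by auto
  have "depends_only_on (jdep f) f" by (rule dep_jdep[OF S])
  moreover have "jdep f \<subseteq> X0" using x unfolding xonly_def X0_def by auto
  ultimately show ?thesis by (intro dep_mono[of "jdep f" X0 f])
qed

lemma dox_xonly: "depends_only_on X0 f \<Longrightarrow> xonly f"
proof -
  assume "depends_only_on X0 f"
  then have "jdep f \<subseteq> X0" by (rule jdep_sub)
  then show ?thesis unfolding xonly_def X0_def by auto
qed


definition Y :: "nat \<Rightarrow> nat \<Rightarrow> midx" where
  "Y i c = (\<lambda>k. if k = 1 then c else if k = i then 1 else 0)"

lemma Y_unit: "i \<noteq> 1 \<Longrightarrow> unit_midx i = Y i 0"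
  by (rule ext) (simp add: Y_def unit_midx_def)
lemma shift1_Y: "i \<noteq> 1 \<Longrightarrow> shift_midx 1 (Y i c) = Y i (Suc c)"
  by (rule ext) (simp add: Y_def shift_midx_def)
lemma shifti_xm: "i \<noteq> 1 \<Longrightarrow> shift_midx i (xm c) = Y i c"
  by (rule ext) (simp add: Y_def shift_midx_def xm_def)
lemma Y_nX0: "i \<noteq> 1 \<Longrightarrow> Y i c \<notin> X0"
  unfolding X0_def Y_def by auto
lemma valid_Y: "1 \<le> i \<Longrightarrow> i \<le> N \<Longrightarrow> valid_midx N (Y i c)"
  unfolding valid_midx_def Y_def by auto
lemma shiftp_Y: "i \<noteq> 1 \<Longrightarrow> (shift_midx 1 ^^ a) (Y i c) = Y i (c + a)"
  by (induction a) (simp_all add: shift1_Y)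
lemma TDp_crdY: "i \<noteq> 1 \<Longrightarrow> (TD 1 ^^ a) (\<lambda>z. z (Y i c)) = (\<lambda>z. z (Y i (c + a)))"
  by (simp add: TDp_crd shiftp_Y)

definition tau :: "nat \<Rightarrow> (jet \<Rightarrow> real) \<Rightarrow> jet \<Rightarrow> jet" where
  "tau i q z = (\<lambda>J. if J \<in> X0 then z J else if (\<exists>c. J = Y i c) then (TD 1 ^^ (J 1)) q z else 0)"

lemma tau_X0: "J \<in> X0 \<Longrightarrow> tau i q z J = z J" by (simp add: tau_def)
lemma tau_Y: "i \<noteq> 1 \<Longrightarrow> tau i q z (Y i c) = (TD 1 ^^ c) q z"
  using Y_nX0[of i c] by (auto simp: tau_def Y_def)
lemma tau_eq: "depends_only_on X0 f \<Longrightarrow> f (tau i q z) = f z"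
  by (rule dox_eq[of f]) (simp_all add: tau_X0)
lemma pj_eq: "depends_only_on X0 f \<Longrightarrow> f (pj z) = f z"
  by (rule dox_eq[of f]) (simp_all add: pj_X0)

lemma TD_pj_zero: "k \<noteq> 1 \<Longrightarrow> TD k f (pj z) = 0"
  unfolding TD_def by (simp add: pj_nX0[OF shift_nX0])

lemma TD1_pj: "ok A \<Longrightarrow> TD 1 (\<lambda>z. A (pj z)) z = TD 1 A (pj z)"
proof -
  assume A: "ok A"
  have fin: "finite (jdep A)" using A by (simp add: ok_fin)
  have "TD 1 (\<lambda>z. A (pj z)) z = (\<Sum>I\<in>jdep A. z (shift_midx 1 I) * pd I (\<lambda>z. A (pj z)) z)"
    unfolding TD_der by (rule der_sup[OF fin jdep_pj])
  also have "\<dots> = (\<Sum>I\<in>jdep A. pj z (shift_midx 1 I) * pd I A (pj z))"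
  proof (rule sum.cong)
    fix I assume "I \<in> jdep A"
    show "z (shift_midx 1 I) * pd I (\<lambda>z. A (pj z)) z = pj z (shift_midx 1 I) * pd I A (pj z)"
    proof (cases "I \<in> X0")
      case True
      then show ?thesis by (simp add: pd_pj pj_X0 shift1_X0)
    next
      case False
      then have "shift_midx 1 I \<notin> X0" using shift1_X0' by blast
      then show ?thesis using False by (simp add: pd_pj pj_nX0)
    qed
  qed simp
  also have "\<dots> = TD 1 A (pj z)" by (simp add: TD_def)
  finally show ?thesis .
qed

lemma TD_sol: "on_solutions N Q z \<Longrightarrow> i \<in> {2..N} \<Longrightarrow> fdep N f \<Longrightarrow> TD i f z = prol N (Q i) f z"
proof -
  assume s: "on_solutions N Q z" and i: "i \<in> {2..N}" and f: "fdep N f"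
  have v: "jdep f \<subseteq> {I. valid_midx N I}" using fdep_valid[OF f] .
  show ?thesis unfolding TD_def prol_def
  proof (rule sum.cong)
    fix I assume "I \<in> jdep f"
    then have "valid_midx N I" using v by blast
    then have "z (shift_midx i I) = TDm N I (Q i) z" using s i unfolding on_solutions_def by blast
    then show "z (shift_midx i I) * pd I f z = TDm N I (Q i) z * pd I f z" by simp
  qed simp
qed

lemma xsum: "jdep f \<subseteq> xm ` {..<M} \<Longrightarrow> der c f z = (\<Sum>a<M. c (xm a) z * pd (xm a) f z)"
proof -
  assume h: "jdep f \<subseteq> xm ` {..<M}"
  have "der c f z = (\<Sum>I\<in>xm ` {..<M}. c I z * pd I f z)" by (rule der_sup[OF _ h]) simp
  also have "\<dots> = (\<Sum>a<M. c (xm a) z * pd (xm a) f z)"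
    by (subst sum.reindex) (auto intro: inj_on_subset[OF inj_xm])
  finally show ?thesis .
qed

lemma X0_bound: "finite U \<Longrightarrow> U \<subseteq> X0 \<Longrightarrow> \<exists>M. U \<subseteq> xm ` {..<M}"
proof -
  assume fU: "finite U" and U: "U \<subseteq> X0"
  let ?M = "Suc (Max (insert 0 ((\<lambda>I. I 1) ` U)))"
  have "U \<subseteq> xm ` {..<?M}"
  proof
    fix I assume I: "I \<in> U"
    then have e: "I = xm (I 1)" using U X0_xm by blast
    have "I 1 \<le> Max (insert 0 ((\<lambda>I. I 1) ` U))" using fU I by (intro Max_ge) auto
    then have "I 1 \<in> {..<?M}" by simp
    then show "I \<in> xm ` {..<?M}" using e by (intro image_eqI[of I xm "I 1"]) auto
  qed
  then show ?thesis by blast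
qed

lemma der_lag: "ok p \<Longrightarrow> ok (h j) \<Longrightarrow>
  der c (lag p h j) = (\<lambda>z. der c p z * z (unit_midx j) + p z * c (unit_midx j) z - der c (h j) z)"
proof -
  assume p: "ok p" and hj: "ok (h j)"
  have "der c (lag p h j) = (\<lambda>z. der c (\<lambda>z. p z * z (unit_midx j)) z - der c (h j) z)"
    unfolding lag_def by (rule der_diff[OF ok_mult[OF p ok_crd] hj])
  also have "der c (\<lambda>z. p z * z (unit_midx j)) = (\<lambda>z. der c p z * z (unit_midx j) + p z * c (unit_midx j) z)"
    by (simp add: der_mult[OF p ok_crd] der_crd)
  finally show ?thesis by simp
qed

fun ibpW :: "nat \<Rightarrow> (jet \<Rightarrow> real) \<Rightarrow> (jet \<Rightarrow> real) \<Rightarrow> jet \<Rightarrow> real" where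
  "ibpW 0 f g = (\<lambda>z. 0)"
| "ibpW (Suc a) f g = (\<lambda>z. ibpW a f (TD 1 g) z + g z * ((-1)^a * (TD 1 ^^ a) f z))"

lemma ibpW_ok: "ok f \<Longrightarrow> ok g \<Longrightarrow> ok (ibpW a f g)"
proof (induction a arbitrary: g)
  case 0 then show ?case by (simp add: ok_const)
next
  case (Suc a)
  have "ok (ibpW a f (TD 1 g))" using Suc by (simp add: ok_TD)
  moreover have "ok (\<lambda>z. g z * ((-1)^a * (TD 1 ^^ a) f z))"
    using Suc.prems by (intro ok_mult ok_const TDp_ok)
  ultimately show ?case by (simp add: ok_add)
qed

lemma ibpW_jfun: "1 \<le> N \<Longrightarrow> jfun N f \<Longrightarrow> jfun N g \<Longrightarrow> jfun N (ibpW a f g)"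
proof (induction a arbitrary: g)
  case 0 then show ?case by (simp add: jfun_const)
next
  case (Suc a)
  have "jfun N (ibpW a f (TD 1 g))" using Suc by (simp add: jfun_TD)
  moreover have "jfun N (\<lambda>z. g z * ((-1)^a * (TD 1 ^^ a) f z))"
    using Suc.prems by (intro jfun_mult jfun_const TDp_jfun) auto
  ultimately show ?case by (simp add: jfun_add)
qed

lemma ibpW_dox: "depends_only_on X0 f \<Longrightarrow> depends_only_on X0 g \<Longrightarrow> depends_only_on X0 (ibpW a f g)"
proof (induction a arbitrary: g)
  case 0 then show ?case by (simp add: dep_const)
next
  case (Suc a)
  have 1: "depends_only_on X0 (ibpW a f (TD 1 g))" using Suc by (simp add: dox_TD1)
  have 2: "depends_only_on X0 (\<lambda>z. (-1)^a * (TD 1 ^^ a) f z)"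
    by (rule dep_op[OF dep_const dox_TDp[OF Suc.prems(1)]])
  have 3: "depends_only_on X0 (\<lambda>z. g z * ((-1)^a * (TD 1 ^^ a) f z))"
    by (rule dep_op[OF Suc.prems(2) 2])
  show ?case using dep_op[OF 1 3, of "\<lambda>x y. x + y"] by simp
qed

lemma ibp: "ok f \<Longrightarrow> ok g \<Longrightarrow>
  (TD 1 ^^ a) g z * f z = g z * ((-1)^a * (TD 1 ^^ a) f z) + TD 1 (ibpW a f g) z"
proof (induction a arbitrary: g)
  case 0 then show ?case by (simp add: TD_const)
next
  case (Suc a)
  have g1: "ok (TD 1 g)" using Suc.prems by (simp add: ok_TD)
  have IH: "(TD 1 ^^ a) (TD 1 g) z * f z = TD 1 g z * ((-1)^a * (TD 1 ^^ a) f z) + TD 1 (ibpW a f (TD 1 g)) z"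
    using Suc.IH[OF Suc.prems(1) g1] .
  have e1: "(TD 1 ^^ Suc a) g = (TD 1 ^^ a) (TD 1 g)" by (simp only: funpow_Suc_right o_apply)
  have e2: "(TD 1 ^^ Suc a) f = TD 1 ((TD 1 ^^ a) f)" by (simp only: funpow.simps o_apply)
  have oa: "ok ((TD 1 ^^ a) f)" using Suc.prems by (simp add: TDp_ok)
  have oc: "ok (\<lambda>z. (-1)^a * (TD 1 ^^ a) f z)" using oa by (intro ok_mult ok_const)
  have t1: "TD 1 (ibpW (Suc a) f g) z = TD 1 (ibpW a f (TD 1 g)) z + TD 1 (\<lambda>z. g z * ((-1)^a * (TD 1 ^^ a) f z)) z"
    using TD_add[OF ibpW_ok[OF Suc.prems(1) g1] ok_mult[OF Suc.prems(2) oc], of 1] by simp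
  have t2: "TD 1 (\<lambda>z. g z * ((-1)^a * (TD 1 ^^ a) f z)) z
      = TD 1 g z * ((-1)^a * (TD 1 ^^ a) f z) + g z * ((-1)^a * TD 1 ((TD 1 ^^ a) f) z)"
    using TD_mult[OF Suc.prems(2) oc, of 1] TD_cmult[OF oa, of 1 "(-1)^a"] by simp
  show ?case unfolding e1 e2 IH t1 t2 by (simp add: algebra_simps)
qed

lemma slice:
  assumes i: "i \<noteq> 1" and q: "ok q" "depends_only_on X0 q"
  shows "ok f \<Longrightarrow> depends_only_on X0 f \<Longrightarrow>
    (TD 1 ^^ a) (\<lambda>w. f w * w (Y i c)) (tau i q z) = (TD 1 ^^ a) (\<lambda>w. f w * (TD 1 ^^ c) q w) (tau i q z)"
proof (induction a arbitrary: f c)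
  case 0
  have "(TD 1 ^^ c) q (tau i q z) = (TD 1 ^^ c) q z" by (rule tau_eq[OF dox_TDp[OF q(2)]])
  then show ?case using tau_Y[OF i, of q z c] by simp
next
  case (Suc a)
  have f1: "ok (TD 1 f)" "depends_only_on X0 (TD 1 f)" using Suc.prems by (simp_all add: ok_TD dox_TD1)
  have qc: "ok ((TD 1 ^^ c) q)" using q by (simp add: TDp_ok)
  have e1: "TD 1 (\<lambda>w. f w * w (Y i c)) = (\<lambda>w. TD 1 f w * w (Y i c) + f w * w (Y i (Suc c)))"
    using TD_mult[OF Suc.prems(1) ok_crd, of 1 "Y i c"] by (simp add: TD_crd shift1_Y[OF i])
  have e2: "TD 1 (\<lambda>w. f w * (TD 1 ^^ c) q w) = (\<lambda>w. TD 1 f w * (TD 1 ^^ c) q w + f w * (TD 1 ^^ Suc c) q w)"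
    using TD_mult[OF Suc.prems(1) qc, of 1] by simp
  have "(TD 1 ^^ Suc a) (\<lambda>w. f w * w (Y i c)) = (TD 1 ^^ a) (TD 1 (\<lambda>w. f w * w (Y i c)))"
    by (simp only: funpow_Suc_right o_apply)
  also have "\<dots> = (\<lambda>w. (TD 1 ^^ a) (\<lambda>w. TD 1 f w * w (Y i c)) w + (TD 1 ^^ a) (\<lambda>w. f w * w (Y i (Suc c))) w)"
    unfolding e1 by (rule TDp_add[OF ok_mult[OF f1(1) ok_crd] ok_mult[OF Suc.prems(1) ok_crd]])
  finally have L: "(TD 1 ^^ Suc a) (\<lambda>w. f w * w (Y i c)) (tau i q z)
     = (TD 1 ^^ a) (\<lambda>w. TD 1 f w * w (Y i c)) (tau i q z) + (TD 1 ^^ a) (\<lambda>w. f w * w (Y i (Suc c))) (tau i q z)"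
    by simp
  have qc1: "ok ((TD 1 ^^ Suc c) q)" by (rule TDp_ok[OF q(1)])
  have "(TD 1 ^^ Suc a) (\<lambda>w. f w * (TD 1 ^^ c) q w) = (TD 1 ^^ a) (TD 1 (\<lambda>w. f w * (TD 1 ^^ c) q w))"
    by (simp only: funpow_Suc_right o_apply)
  also have "\<dots> = (\<lambda>w. (TD 1 ^^ a) (\<lambda>w. TD 1 f w * (TD 1 ^^ c) q w) w + (TD 1 ^^ a) (\<lambda>w. f w * (TD 1 ^^ Suc c) q w) w)"
    unfolding e2 by (rule TDp_add[OF ok_mult[OF f1(1) qc] ok_mult[OF Suc.prems(1) qc1]])
  finally have R: "(TD 1 ^^ Suc a) (\<lambda>w. f w * (TD 1 ^^ c) q w) (tau i q z)
     = (TD 1 ^^ a) (\<lambda>w. TD 1 f w * (TD 1 ^^ c) q w) (tau i q z) + (TD 1 ^^ a) (\<lambda>w. f w * (TD 1 ^^ Suc c) q w) (tau i q z)"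
    by simp
  show ?case unfolding L R using Suc.IH[OF f1] Suc.IH[OF Suc.prems] by simp
qed


lemma prolx: "1 \<le> N \<Longrightarrow> jdep f \<subseteq> xm ` {..<M} \<Longrightarrow>
   prol N Q f z = (\<Sum>b<M. (TD 1 ^^ b) Q z * pd (xm b) f z)"
  unfolding prol_der by (simp add: xsum TDm_xm)

lemma TDx: "jdep f \<subseteq> xm ` {..<M} \<Longrightarrow> TD k f z = (\<Sum>b<M. z (shift_midx k (xm b)) * pd (xm b) f z)"
  unfolding TD_der by (rule xsum)

lemma prolx_dox: "1 \<le> N \<Longrightarrow> jdep f \<subseteq> xm ` {..<M} \<Longrightarrow> depends_only_on X0 Q \<Longrightarrow>
   depends_only_on X0 f \<Longrightarrow> depends_only_on X0 (prol N Q f)"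
proof -
  assume N: "1 \<le> N" and M: "jdep f \<subseteq> xm ` {..<M}" and q: "depends_only_on X0 Q" and f: "depends_only_on X0 f"
  have e: "prol N Q f = (\<lambda>z. \<Sum>b<M. (TD 1 ^^ b) Q z * pd (xm b) f z)"
    by (rule ext) (rule prolx[OF N M])
  show ?thesis unfolding e
  proof (rule dep_sum)
    fix b show "depends_only_on X0 (\<lambda>z. (TD 1 ^^ b) Q z * pd (xm b) f z)"
      by (rule dep_op[OF dox_TDp[OF q] dep_pd[OF f]])
  qed
qed

theorem lemma1:
  fixes N :: nat and Q h :: "nat \<Rightarrow> jet \<Rightarrow> real" and p :: "jet \<Rightarrow> real"
    and n :: nat and a :: "nat \<Rightarrow> jet \<Rightarrow> real"
  assumes N3: "N \<ge> 3"
    and Q_jet: "\<forall>i\<in>{2..N}. jfun N (Q i) \<and> xonly (Q i) \<and> zero_midx \<notin> jdep (Q i)"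
    and p_jet: "jfun N p \<and> xonly p"
    and h_jet: "\<forall>i\<in>{2..N}. jfun N (h i) \<and> xonly (h i)"
    and E_jet: "\<forall>k<n. jfun N (a k) \<and> xonly (a k)"
    and EL: "\<forall>i\<in>{2..N}. vard 1 i (lag p h i) zero_midx
                = xop n a (\<lambda>z. z (unit_midx i) - Q i z)"
    and commute: "\<forall>i\<in>{2..N}. \<forall>j\<in>{2..N}. \<forall>f. jfun N f \<longrightarrow>
                prol N (Q i) (prol N (Q j) f) = prol N (Q j) (prol N (Q i) f)"
    and varsym: "\<forall>i\<in>{2..N}. \<forall>j\<in>{2..N}. i \<noteq> j \<longrightarrow>
                (\<exists>A B. jfun N A \<and> jfun N B \<and>
                   prol N (Q i) (lag p h j) = (\<lambda>z. TD 1 A z + TD j B z))"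
  shows "\<forall>i\<in>{2..N}. \<forall>j\<in>{2..N}. i \<noteq> j \<longrightarrow>
           (\<exists>F. jfun N F \<and> xonly F \<and>
              (\<forall>z. on_solutions N Q z \<longrightarrow>
                  TD 1 F z = TD i (lag p h j) z - TD j (lag p h i) z))"
proof (intro ballI impI)
  fix i j assume i: "i \<in> {2..N}" and j: "j \<in> {2..N}" and ij: "i \<noteq> j"
  have N1: "1 \<le> N" using N3 by simp
  have i1: "i \<noteq> 1" "1 \<le> i" "i \<le> N" using i by auto
  have j1: "j \<noteq> 1" "1 \<le> j" "j \<le> N" using j by auto
  have jQi: "jfun N (Q i)" and jQj: "jfun N (Q j)" using Q_jet i j by auto
  have jp: "jfun N p" using p_jet by simp
  have jhi: "jfun N (h i)" and jhj: "jfun N (h j)" using h_jet i j by auto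
  have dQi: "depends_only_on X0 (Q i)" using Q_jet i jQi xonly_dox by blast
  have dQj: "depends_only_on X0 (Q j)" using Q_jet j jQj xonly_dox by blast
  have dp: "depends_only_on X0 p" using p_jet jp xonly_dox by blast
  have dhi: "depends_only_on X0 (h i)" using h_jet i jhi xonly_dox by blast
  have dhj: "depends_only_on X0 (h j)" using h_jet j jhj xonly_dox by blast
  have oQi: "ok (Q i)" and oQj: "ok (Q j)" and op: "ok p" and ohi: "ok (h i)" and ohj: "ok (h j)"
    using jQi jQj jp jhi jhj by (simp_all add: jfun_ok)
  have U0: "jdep p \<union> jdep (h i) \<union> jdep (h j) \<subseteq> X0"
    using jdep_sub[OF dp] jdep_sub[OF dhi] jdep_sub[OF dhj] by blast
  have Uf: "finite (jdep p \<union> jdep (h i) \<union> jdep (h j))" using op ohi ohj by (simp add: ok_fin)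
  obtain M where M: "jdep p \<union> jdep (h i) \<union> jdep (h j) \<subseteq> xm ` {..<M}"
    using X0_bound[OF Uf U0] by blast
  have Mp: "jdep p \<subseteq> xm ` {..<M}" and Mhi: "jdep (h i) \<subseteq> xm ` {..<M}" and Mhj: "jdep (h j) \<subseteq> xm ` {..<M}"
    using M by auto

  (* Step D: variational symmetry on the slice *)
  obtain A B where jA: "jfun N A" and jB: "jfun N B"
    and AB: "prol N (Q i) (lag p h j) = (\<lambda>z. TD 1 A z + TD j B z)"
    using varsym i j ij by blast
  have oA: "ok A" using jA by (simp add: jfun_ok)
  have stepD: "prol N (Q i) (h j) z = - TD 1 A (pj z)" for z
  proof -
    have e: "prol N (Q i) (lag p h j) (pj z) = prol N (Q i) p (pj z) * pj z (unit_midx j)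
        + p (pj z) * TDm N (unit_midx j) (Q i) (pj z) - prol N (Q i) (h j) (pj z)"
      by (simp only: prol_der der_lag[where h=h and j=j, OF op ohj])
    have z1: "pj z (unit_midx j) = 0" using pj_nX0[OF unit_nX0[OF j1(1)]] .
    have z2: "TDm N (unit_midx j) (Q i) (pj z) = 0" using TDm_unit[OF j1(2,3)] TD_pj_zero[OF j1(1)] by simp
    have z3: "TD j B (pj z) = 0" using TD_pj_zero[OF j1(1)] .
    have dd: "depends_only_on X0 (prol N (Q i) (h j))" by (rule prolx_dox[OF N1 Mhj dQi dhj])
    have z4: "prol N (Q i) (h j) (pj z) = prol N (Q i) (h j) z" by (rule pj_eq[OF dd])
    have "prol N (Q i) (lag p h j) (pj z) = TD 1 A (pj z) + TD j B (pj z)" using AB by simp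
    then show ?thesis using e z1 z2 z3 z4 by simp
  qed

  (* Step E: Euler-Lagrange equation on the partial solution slice *)
  have stepE: "(\<Sum>b<M. (-1)^b * ((TD 1 ^^ b) (\<lambda>w. pd (xm b) p w * Q i w) z - (TD 1 ^^ b) (pd (xm b) (h i)) z))
               - prol N (Q i) p z = 0" for z
  proof -
    let ?z' = "tau i (Q i) z"
    let ?L = "lag p h i"
    have EL_i: "vard 1 i ?L zero_midx ?z' = xop n a (\<lambda>z. z (unit_midx i) - Q i z) ?z'" using EL i by simp
    have R0: "xop n a (\<lambda>z. z (unit_midx i) - Q i z) ?z' = 0"
    proof -
      have "(TD 1 ^^ k) (\<lambda>z. z (unit_midx i) - Q i z) ?z' = 0" for k
      proof -
        have "(TD 1 ^^ k) (\<lambda>z. z (unit_midx i) - Q i z) = (\<lambda>w. (TD 1 ^^ k) (\<lambda>z. z (unit_midx i)) w - (TD 1 ^^ k) (Q i) w)"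
          by (rule TDp_diff[OF ok_crd oQi])
        also have "(TD 1 ^^ k) (\<lambda>z. z (unit_midx i)) = (\<lambda>w. w (Y i k))"
          using TDp_crdY[OF i1(1), of k 0] Y_unit[OF i1(1)] by simp
        finally show ?thesis using tau_Y[OF i1(1)] tau_eq[OF dox_TDp[OF dQi]] by simp
      qed
      then show ?thesis unfolding xop_def by simp
    qed
    have jL: "jdep ?L \<subseteq> xm ` {..<M} \<union> {unit_midx i}"
    proof -
      have "jdep ?L \<subseteq> jdep (\<lambda>z. p z * z (unit_midx i)) \<union> jdep (h i)" unfolding lag_def by (rule jdep_op)
      moreover have "jdep (\<lambda>z. p z * z (unit_midx i)) \<subseteq> jdep p \<union> jdep (\<lambda>z. z (unit_midx i))" by (rule jdep_op)
      ultimately show ?thesis using jdep_crd[of "unit_midx i"] Mp Mhi by blast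
    qed
    define T where "T = (\<lambda>b. (b, 0::nat)) ` {..<M} \<union> {(0::nat, 1::nat)}"
    define tm where "tm = (\<lambda>(c::nat, d::nat). (-1::real) ^ (c + d) *
        (TD 1 ^^ c) ((TD i ^^ d) (pd (plane_midx 1 i zero_midx c d) ?L)) ?z')"
    have pl0: "plane_midx 1 i zero_midx c 0 = xm c" for c
      using i1(1) by (intro ext) (simp add: plane_midx_def zero_midx_def xm_def)
    have pl1: "plane_midx 1 i zero_midx 0 1 = unit_midx i"
      using i1(1) by (intro ext) (simp add: plane_midx_def zero_midx_def unit_midx_def)
    have PT: "{(c, d). plane_midx 1 i zero_midx c d \<in> jdep ?L} \<subseteq> T"
    proof
      fix x assume x: "x \<in> {(c, d). plane_midx 1 i zero_midx c d \<in> jdep ?L}"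
      obtain c d where cd: "x = (c, d)" by (cases x)
      have "plane_midx 1 i zero_midx c d \<in> xm ` {..<M} \<union> {unit_midx i}" using x cd jL by auto
      then show "x \<in> T"
      proof
        assume "plane_midx 1 i zero_midx c d \<in> xm ` {..<M}"
        then obtain e where e: "e < M" "plane_midx 1 i zero_midx c d = xm e" by auto
        have "plane_midx 1 i zero_midx c d i = xm e i" "plane_midx 1 i zero_midx c d 1 = xm e 1"
          using e(2) by simp_all
        then have "d = 0" "c = e" using i1(1) by (simp_all add: plane_midx_def zero_midx_def xm_def)
        then show ?thesis using cd e(1) T_def by auto
      next
        assume "plane_midx 1 i zero_midx c d \<in> {unit_midx i}"
        then have pe: "plane_midx 1 i zero_midx c d = unit_midx i" by simp
        have "plane_midx 1 i zero_midx c d i = unit_midx i i" "plane_midx 1 i zero_midx c d 1 = unit_midx i 1"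
          using pe by simp_all
        then have "d = 1" "c = 0" using i1(1) by (simp_all add: plane_midx_def zero_midx_def unit_midx_def)
        then show ?thesis using cd T_def by auto
      qed
    qed
    have finT: "finite T" unfolding T_def by simp
    have v1: "vard 1 i ?L zero_midx ?z' = (\<Sum>x\<in>{(c, d). plane_midx 1 i zero_midx c d \<in> jdep ?L}. tm x)"
      unfolding vard_def tm_def by (rule refl)
    have v2: "(\<Sum>x\<in>{(c, d). plane_midx 1 i zero_midx c d \<in> jdep ?L}. tm x) = (\<Sum>x\<in>T. tm x)"
    proof (rule sum.mono_neutral_left[OF finT PT])
      show "\<forall>x\<in>T - {(c, d). plane_midx 1 i zero_midx c d \<in> jdep ?L}. tm x = 0"
      proof
        fix x assume x: "x \<in> T - {(c, d). plane_midx 1 i zero_midx c d \<in> jdep ?L}"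
        obtain c d where cd: "x = (c, d)" by (cases x)
        have "plane_midx 1 i zero_midx c d \<notin> jdep ?L" using x cd by auto
        then have "pd (plane_midx 1 i zero_midx c d) ?L = (\<lambda>z. 0)" by (rule pd_notin)
        then show "tm x = 0" unfolding tm_def cd by (simp add: TDp_const0)
      qed
    qed
    have v3: "(\<Sum>x\<in>T. tm x) = (\<Sum>b<M. tm (b, 0)) + tm (0, 1)"
    proof -
      have "(\<Sum>x\<in>T. tm x) = (\<Sum>x\<in>(\<lambda>b. (b, 0::nat)) ` {..<M}. tm x) + (\<Sum>x\<in>{(0::nat, 1::nat)}. tm x)"
        unfolding T_def by (rule sum.union_disjoint) auto
      also have "(\<Sum>x\<in>(\<lambda>b. (b, 0::nat)) ` {..<M}. tm x) = (\<Sum>b<M. tm (b, 0))"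
        by (subst sum.reindex) (auto simp: inj_on_def)
      finally show ?thesis by simp
    qed
    have pdx: "pd (xm b) ?L = (\<lambda>w. pd (xm b) p w * w (Y i 0) - pd (xm b) (h i) w)" for b
    proof -
      have ne: "xm b \<noteq> unit_midx i" using xm_X0[of b] unit_nX0[OF i1(1)] by auto
      have "pd (xm b) ?L = (\<lambda>w. pd (xm b) (\<lambda>z. p z * z (unit_midx i)) w - pd (xm b) (h i) w)"
        unfolding lag_def by (rule pd_diff[OF pdiff_mult[OF js_pdiff[OF ok_js[OF op]] pdiff_crd] js_pdiff[OF ok_js[OF ohi]]])
      also have "pd (xm b) (\<lambda>z. p z * z (unit_midx i)) = (\<lambda>w. pd (xm b) p w * w (unit_midx i))"
        using pd_mult[OF js_pdiff[OF ok_js[OF op]] pdiff_crd, of "xm b" "unit_midx i"] ne by (simp add: pd_crd)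
      finally show ?thesis using Y_unit[OF i1(1)] by simp
    qed
    have pdu: "pd (unit_midx i) ?L = p"
    proof -
      have n1: "unit_midx i \<notin> jdep p" "unit_midx i \<notin> jdep (h i)"
        using jdep_sub[OF dp] jdep_sub[OF dhi] unit_nX0[OF i1(1)] by auto
      have "pd (unit_midx i) ?L = (\<lambda>w. pd (unit_midx i) (\<lambda>z. p z * z (unit_midx i)) w - pd (unit_midx i) (h i) w)"
        unfolding lag_def by (rule pd_diff[OF pdiff_mult[OF js_pdiff[OF ok_js[OF op]] pdiff_crd] js_pdiff[OF ok_js[OF ohi]]])
      also have "pd (unit_midx i) (\<lambda>z. p z * z (unit_midx i)) = (\<lambda>w. pd (unit_midx i) p w * w (unit_midx i) + p w)"
        using pd_mult[OF js_pdiff[OF ok_js[OF op]] pdiff_crd, of "unit_midx i" "unit_midx i"] by (simp add: pd_crd)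
      finally show ?thesis using n1 by (simp add: pd_notin)
    qed
    have tb: "tm (b, 0) = (-1)^b * ((TD 1 ^^ b) (\<lambda>w. pd (xm b) p w * Q i w) z - (TD 1 ^^ b) (pd (xm b) (h i)) z)" for b
    proof -
      have opb: "ok (pd (xm b) p)" using op by (rule ok_pd)
      have dpb: "depends_only_on X0 (pd (xm b) p)" using dp by (rule dep_pd)
      have "tm (b, 0) = (-1)^b * (TD 1 ^^ b) (pd (xm b) ?L) ?z'"
        unfolding tm_def by (simp add: pl0)
      also have "(TD 1 ^^ b) (pd (xm b) ?L) = (\<lambda>w. (TD 1 ^^ b) (\<lambda>w. pd (xm b) p w * w (Y i 0)) w - (TD 1 ^^ b) (pd (xm b) (h i)) w)"
        unfolding pdx by (rule TDp_diff[OF ok_mult[OF opb ok_crd] ok_pd[OF ohi]])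
      also have "(TD 1 ^^ b) (\<lambda>w. pd (xm b) p w * w (Y i 0)) ?z' = (TD 1 ^^ b) (\<lambda>w. pd (xm b) p w * (TD 1 ^^ 0) (Q i) w) ?z'"
        by (rule slice[OF i1(1) oQi dQi opb dpb])
      also have "\<dots> = (TD 1 ^^ b) (\<lambda>w. pd (xm b) p w * Q i w) z"
        using tau_eq[OF dox_TDp[OF dep_op[OF dpb dQi, of "\<lambda>x y. x * y"]]] by simp
      moreover have "(TD 1 ^^ b) (pd (xm b) (h i)) ?z' = (TD 1 ^^ b) (pd (xm b) (h i)) z"
        by (rule tau_eq[OF dox_TDp[OF dep_pd[OF dhi]]])
      ultimately show ?thesis by simp
    qed
    have t01: "tm (0, 1) = - prol N (Q i) p z"
    proof -
      have "tm (0, 1) = - TD i p ?z'" unfolding tm_def by (simp add: pl1 pdu) (simp add: One_nat_def)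
      also have "TD i p ?z' = (\<Sum>b<M. ?z' (shift_midx i (xm b)) * pd (xm b) p ?z')" by (rule TDx[OF Mp])
      also have "\<dots> = (\<Sum>b<M. (TD 1 ^^ b) (Q i) z * pd (xm b) p z)"
        by (intro sum.cong refl) (simp add: shifti_xm[OF i1(1)] tau_Y[OF i1(1)] tau_eq[OF dep_pd[OF dp]])
      also have "\<dots> = prol N (Q i) p z" by (rule prolx[OF N1 Mp, symmetric])
      finally show ?thesis .
    qed
    have "vard 1 i ?L zero_midx ?z' = (\<Sum>b<M. (-1)^b * ((TD 1 ^^ b) (\<lambda>w. pd (xm b) p w * Q i w) z - (TD 1 ^^ b) (pd (xm b) (h i)) z))
               - prol N (Q i) p z"
      unfolding v1 v2 v3 tb t01 by simp
    then show ?thesis using EL_i R0 by simp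
  qed

  (* Step F: integration by parts *)
  define W1 where "W1 = (\<lambda>z. \<Sum>b<M. ibpW b (pd (xm b) (h i)) (Q j) z)"
  define W2 where "W2 = (\<lambda>z. \<Sum>b<M. ibpW b (\<lambda>w. pd (xm b) p w * Q i w) (Q j) z)"
  define F where "F = (\<lambda>z. W1 z - W2 z + A (pj z))"
  have opQ: "ok (\<lambda>w. pd (xm b) p w * Q i w)" for b using ok_mult[OF ok_pd[OF op] oQi] .
  have oW1: "ok W1" unfolding W1_def by (intro ok_sum) (auto intro: ibpW_ok ok_pd ohi oQj)
  have oW2: "ok W2" unfolding W2_def by (intro ok_sum) (auto intro: ibpW_ok opQ oQj)
  have jW1: "jfun N W1" unfolding W1_def by (intro jfun_sum) (auto intro: ibpW_jfun[OF N1] jfun_pd jhi jQj)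
  have jW2: "jfun N W2" unfolding W2_def
    by (intro jfun_sum) (auto intro: ibpW_jfun[OF N1] jfun_mult jfun_pd jp jQi jQj)
  have dW1: "depends_only_on X0 W1" unfolding W1_def
    by (intro dep_sum ibpW_dox dep_pd dhi dQj)
  have dW2: "depends_only_on X0 W2" unfolding W2_def
  proof (intro dep_sum ibpW_dox dQj)
    fix b show "depends_only_on X0 (\<lambda>w. pd (xm b) p w * Q i w)"
      by (rule dep_op[OF dep_pd[OF dp] dQi])
  qed
  have jF: "jfun N F" unfolding F_def by (intro jfun_add jfun_diff jW1 jW2 jfun_pj jA)
  have dF: "depends_only_on X0 F" unfolding F_def
  proof -
    have "depends_only_on X0 (\<lambda>z. W1 z - W2 z)" by (rule dep_op[OF dW1 dW2])
    then show "depends_only_on X0 (\<lambda>z. W1 z - W2 z + A (pj z))" by (rule dep_op[OF _ dox_pj])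
  qed
  have TW1: "TD 1 W1 z = (\<Sum>b<M. TD 1 (ibpW b (pd (xm b) (h i)) (Q j)) z)" for z
    unfolding W1_def by (subst TD_sum) (auto intro: ibpW_ok ok_pd ohi oQj)
  have TW2: "TD 1 W2 z = (\<Sum>b<M. TD 1 (ibpW b (\<lambda>w. pd (xm b) p w * Q i w) (Q j)) z)" for z
    unfolding W2_def by (subst TD_sum) (auto intro: ibpW_ok opQ oQj)
  have TF: "TD 1 F z = TD 1 W1 z - TD 1 W2 z + TD 1 A (pj z)" for z
  proof -
    have "TD 1 F = (\<lambda>z. TD 1 (\<lambda>z. W1 z - W2 z) z + TD 1 (\<lambda>z. A (pj z)) z)"
      unfolding F_def by (rule TD_add[OF ok_diff[OF oW1 oW2] ok_pj[OF oA]])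
    then show ?thesis using TD_diff[OF oW1 oW2, of 1] TD1_pj[OF oA, of z] by simp
  qed
  have P1: "prol N (Q j) (h i) z = Q j z * (\<Sum>b<M. (-1)^b * (TD 1 ^^ b) (pd (xm b) (h i)) z) + TD 1 W1 z" for z
  proof -
    have "prol N (Q j) (h i) z = (\<Sum>b<M. (TD 1 ^^ b) (Q j) z * pd (xm b) (h i) z)" by (rule prolx[OF N1 Mhi])
    also have "\<dots> = (\<Sum>b<M. Q j z * ((-1)^b * (TD 1 ^^ b) (pd (xm b) (h i)) z) + TD 1 (ibpW b (pd (xm b) (h i)) (Q j)) z)"
      by (intro sum.cong refl ibp ok_pd ohi oQj)
    also have "\<dots> = Q j z * (\<Sum>b<M. (-1)^b * (TD 1 ^^ b) (pd (xm b) (h i)) z) + TD 1 W1 z"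
      by (simp add: sum.distrib sum_distrib_left TW1)
    finally show ?thesis .
  qed
  have P2: "prol N (Q j) p z * Q i z = Q j z * (\<Sum>b<M. (-1)^b * (TD 1 ^^ b) (\<lambda>w. pd (xm b) p w * Q i w) z) + TD 1 W2 z" for z
  proof -
    have "prol N (Q j) p z * Q i z = (\<Sum>b<M. (TD 1 ^^ b) (Q j) z * (\<lambda>w. pd (xm b) p w * Q i w) z)"
      by (simp add: prolx[OF N1 Mp] sum_distrib_right mult.assoc)
    also have "\<dots> = (\<Sum>b<M. Q j z * ((-1)^b * (TD 1 ^^ b) (\<lambda>w. pd (xm b) p w * Q i w) z) + TD 1 (ibpW b (\<lambda>w. pd (xm b) p w * Q i w) (Q j)) z)"
      by (intro sum.cong refl ibp opQ oQj)
    also have "\<dots> = Q j z * (\<Sum>b<M. (-1)^b * (TD 1 ^^ b) (\<lambda>w. pd (xm b) p w * Q i w) z) + TD 1 W2 z"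
      by (simp add: sum.distrib sum_distrib_left TW2)
    finally show ?thesis .
  qed
  have stepF: "TD 1 F z = prol N (Q i) p z * Q j z - prol N (Q j) p z * Q i z - prol N (Q i) (h j) z + prol N (Q j) (h i) z" for z
  proof -
    let ?S1 = "\<Sum>b<M. (-1)^b * (TD 1 ^^ b) (\<lambda>w. pd (xm b) p w * Q i w) z"
    let ?S2 = "\<Sum>b<M. (-1)^b * (TD 1 ^^ b) (pd (xm b) (h i)) z"
    have E: "?S1 - ?S2 = prol N (Q i) p z"
      using stepE[of z] by (simp add: sum_subtractf right_diff_distrib)
    show ?thesis unfolding TF stepD P1 using P2[of z] E by (simp add: algebra_simps)
  qed

  have jLj: "jfun N (lag p h j)" unfolding lag_def
    by (intro jfun_diff jfun_mult jp jhj jfun_crd valid_unit j1(2,3))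
  have jLi: "jfun N (lag p h i)" unfolding lag_def
    by (intro jfun_diff jfun_mult jp jhi jfun_crd valid_unit i1(2,3))
  have crd0: "jfun N (\<lambda>z. z zero_midx)" by (rule jfun_crd[OF valid_zero])
  have comm: "prol N (Q j) (Q i) = prol N (Q i) (Q j)"
  proof -
    have "prol N (Q j) (prol N (Q i) (\<lambda>z. z zero_midx)) = prol N (Q i) (prol N (Q j) (\<lambda>z. z zero_midx))"
      using commute i j crd0 by blast
    then show ?thesis by (simp add: prol_crd TDm_zero)
  qed
  have sol: "TD 1 F z = TD i (lag p h j) z - TD j (lag p h i) z" if s: "on_solutions N Q z" for z
  proof -
    have t1: "TD i (lag p h j) z = prol N (Q i) (lag p h j) z" by (rule TD_sol[OF s i jfun_fdep[OF jLj]])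
    have t2: "TD j (lag p h i) z = prol N (Q j) (lag p h i) z" by (rule TD_sol[OF s j jfun_fdep[OF jLi]])
    have l1: "prol N (Q i) (lag p h j) z = prol N (Q i) p z * z (unit_midx j) + p z * TD j (Q i) z - prol N (Q i) (h j) z"
      using TDm_unit[OF j1(2,3), of "Q i"] by (simp only: prol_der der_lag[where h=h and j=j, OF op ohj])
    have l2: "prol N (Q j) (lag p h i) z = prol N (Q j) p z * z (unit_midx i) + p z * TD i (Q j) z - prol N (Q j) (h i) z"
      using TDm_unit[OF i1(2,3), of "Q j"] by (simp only: prol_der der_lag[where h=h and j=i, OF op ohi])
    have uj: "z (unit_midx j) = Q j z"
    proof -
      have "z (shift_midx j zero_midx) = TDm N zero_midx (Q j) z"
        using s j valid_zero[of N] unfolding on_solutions_def by blast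
      then show ?thesis by (simp add: shift_zero TDm_zero)
    qed
    have ui: "z (unit_midx i) = Q i z"
    proof -
      have "z (shift_midx i zero_midx) = TDm N zero_midx (Q i) z"
        using s i valid_zero[of N] unfolding on_solutions_def by blast
      then show ?thesis by (simp add: shift_zero TDm_zero)
    qed
    have c1: "TD j (Q i) z = prol N (Q j) (Q i) z" by (rule TD_sol[OF s j jfun_fdep[OF jQi]])
    have c2: "TD i (Q j) z = prol N (Q i) (Q j) z" by (rule TD_sol[OF s i jfun_fdep[OF jQj]])
    show ?thesis unfolding t1 t2 l1 l2 uj ui c1 c2 comm stepF by (simp add: algebra_simps)
  qed
  show "\<exists>F. jfun N F \<and> xonly F \<and>
              (\<forall>z. on_solutions N Q z \<longrightarrow>
                  TD 1 F z = TD i (lag p h j) z - TD j (lag p h i) z)"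
    using jF dox_xonly[OF dF] sol by blast
qed

end
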